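(* Let $G=G^\uparrow\rtimes\{e,\sigma\}$ be a graded Lie group, $(U,\mathcal H)$ an (anti-)unitary representation of $G$, and $\alpha\in Z(G^\uparrow)^-$. Then the commutant $U(G^\uparrow)'$ contains a unitary $Z_\alpha$ with $Z_\alpha^2=U(\alpha)$ and $U(g)Z_\alpha U(g)^{-1}=Z_\alpha^{-1}$ for every $g\in G^\downarrow$.
   Context: $G$ is a finite-dimensional Lie group with continuous homomorphism $\varepsilon_G\colon G\to\{\pm1\}$, $G^\uparrow=\ker\varepsilon_G$, $G^\downarrow=G\setminus G^\uparrow$, $\sigma\in G^\downarrow$ an involution. An (anti-)unitary representation is a continuous homomorphism $U\colon G\to\operatorname{AU}(\mathcal H)$ into the group of unitary and antiunitary operators with $U(g)$ antiunitary iff $g\in G^\downarrow$. $Z(G^\uparrow)$ is the center of $G^\uparrow$ and $Z(G^\uparrow)^-=\{\alpha\in Z(G^\uparrow):\sigma\alpha\sigma=\alpha^{-1}\}$ (independent of the choice of $\sigma\in G^\downarrow$). *)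

theory Defs
  imports "HOL-Analysis.Analysis" "HOL-Algebra.Group"
begin

definition hnorm :: "('h \<Rightarrow> 'h \<Rightarrow> complex) \<Rightarrow> 'h \<Rightarrow> real" where
  "hnorm ip x = sqrt (Re (ip x x))"

locale chilbert =
  fixes sc :: "complex \<Rightarrow> 'h::ab_group_add \<Rightarrow> 'h"
    and ip :: "'h \<Rightarrow> 'h \<Rightarrow> complex"
  assumes sc_add_right: "sc a (x + y) = sc a x + sc a y"
    and sc_add_left: "sc (a + b) x = sc a x + sc b x"
    and sc_assoc: "sc a (sc b x) = sc (a * b) x"
    and sc_one: "sc 1 x = x"
    and ip_add_right: "ip x (y + z) = ip x y + ip x z"
    and ip_sc_right: "ip x (sc a y) = a * ip x y"
    and ip_sym: "ip y x = cnj (ip x y)"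
    and ip_pos: "x \<noteq> 0 \<Longrightarrow> Re (ip x x) > 0"
    and complete: "(\<forall>e>0. \<exists>N. \<forall>m\<ge>N. \<forall>n\<ge>N. hnorm ip (X m - X n) < e)
                    \<Longrightarrow> \<exists>L. (\<lambda>n. hnorm ip (X n - L)) \<longlonglongrightarrow> 0"

definition unitary_op :: "(complex \<Rightarrow> 'h::ab_group_add \<Rightarrow> 'h) \<Rightarrow> ('h \<Rightarrow> 'h \<Rightarrow> complex) \<Rightarrow> ('h \<Rightarrow> 'h) \<Rightarrow> bool" where
  "unitary_op sc ip A \<longleftrightarrow> bij A \<and> (\<forall>x y. A (x + y) = A x + A y)
     \<and> (\<forall>a x. A (sc a x) = sc a (A x)) \<and> (\<forall>x y. ip (A x) (A y) = ip x y)"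

definition antiunitary_op :: "(complex \<Rightarrow> 'h::ab_group_add \<Rightarrow> 'h) \<Rightarrow> ('h \<Rightarrow> 'h \<Rightarrow> complex) \<Rightarrow> ('h \<Rightarrow> 'h) \<Rightarrow> bool" where
  "antiunitary_op sc ip A \<longleftrightarrow> bij A \<and> (\<forall>x y. A (x + y) = A x + A y)
     \<and> (\<forall>a x. A (sc a x) = sc (cnj a) (A x)) \<and> (\<forall>x y. ip (A x) (A y) = cnj (ip x y))"

text \<open>G is a (Hausdorff) topological group with topology T (on its carrier) and
  eps : G \<rightarrow> {1,-1} a continuous homomorphism.  G-up = {g. eps g = 1}, G-down = {g. eps g = -1}.\<close>

definition graded_top_group :: "('g, 'b) monoid_scheme \<Rightarrow> 'g topology \<Rightarrow> ('g \<Rightarrow> real) \<Rightarrow> bool" where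
  "graded_top_group G T eps \<longleftrightarrow> group G \<and> topspace T = carrier G \<and> Hausdorff_space T
     \<and> continuous_map (prod_topology T T) T (\<lambda>(x, y). x \<otimes>\<^bsub>G\<^esub> y)
     \<and> continuous_map T T (\<lambda>x. inv\<^bsub>G\<^esub> x)
     \<and> (\<forall>g\<in>carrier G. eps g \<in> {1, -1})
     \<and> (\<forall>x\<in>carrier G. \<forall>y\<in>carrier G. eps (x \<otimes>\<^bsub>G\<^esub> y) = eps x * eps y)
     \<and> continuous_map T euclideanreal eps"

definition au_rep :: "('g, 'b) monoid_scheme \<Rightarrow> 'g topology \<Rightarrow> ('g \<Rightarrow> real)
    \<Rightarrow> (complex \<Rightarrow> 'h::ab_group_add \<Rightarrow> 'h) \<Rightarrow> ('h \<Rightarrow> 'h \<Rightarrow> complex) \<Rightarrow> ('g \<Rightarrow> 'h \<Rightarrow> 'h) \<Rightarrow> bool" where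
  "au_rep G T eps sc ip U \<longleftrightarrow>
     (\<forall>g\<in>carrier G. (eps g = 1 \<longrightarrow> unitary_op sc ip (U g))
                   \<and> (eps g = -1 \<longrightarrow> antiunitary_op sc ip (U g)))
     \<and> (\<forall>g\<in>carrier G. \<forall>h\<in>carrier G. U (g \<otimes>\<^bsub>G\<^esub> h) = U g \<circ> U h)
     \<and> (\<forall>v. \<forall>g0\<in>carrier G. \<forall>e>0. \<exists>W. openin T W \<and> g0 \<in> W
            \<and> (\<forall>g\<in>W. hnorm ip (U g v - U g0 v) < e))"

end

theory Submission
  imports Defs "HOL-Computational_Algebra.Formal_Power_Series"
begin


definition bc :: "nat \<Rightarrow> real" where "bc k = (1/2::real) gchoose k"

lemma bc_conv: "(\<Sum>i\<le>k. bc i * bc (k - i)) = (if k \<le> 1 then 1 else 0)"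
proof -
  have "(\<Sum>i\<le>k. bc i * bc (k - i)) = (1/2 + 1/2 :: real) gchoose k"
    unfolding bc_def using gbinomial_Vandermonde[of "1/2::real" "1/2" k]
    by (simp add: atMost_atLeast0)
  also have "\<dots> = of_nat (1 choose k)" by (simp add: binomial_gbinomial)
  also have "\<dots> = (if k \<le> 1 then 1 else 0)"
    by (cases k) (auto simp: binomial_eq_0)
  finally show ?thesis .
qed

lemma bc_Suc: "bc (Suc k) = bc k * (1/2 - real k) / (real k + 1)"
proof -
  have "(1/2::real) * bc k = real k * bc k + real (Suc k) * bc (Suc k)"
    unfolding bc_def by (rule gbinomial_mult_1)
  then show ?thesis by (simp add: field_simps)
qed

definition sg :: "nat \<Rightarrow> real" where "sg k = (-1)^k * bc k"

lemma sg_rec: "sg (Suc m) = - (\<Sum>k\<le>m. sg k) / (2 * real m + 2)"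
proof (induction m)
  case 0
  then show ?case by (simp add: sg_def bc_Suc bc_def)
next
  case (Suc m)
  have "sg (Suc (Suc m)) = sg (Suc m) * (real m + 1/2) / (real m + 2)"
    by (simp add: sg_def bc_Suc field_simps)
  also have "\<dots> = - (\<Sum>k\<le>m. sg k) / (2 * real m + 2) * (real m + 1/2) / (real m + 2)"
    using Suc by simp
  also have "\<dots> = - ((\<Sum>k\<le>m. sg k) + sg (Suc m)) / (2 * real (Suc m) + 2)"
    unfolding Suc.IH by (simp add: field_simps)
  finally show ?case by simp
qed

lemma sg_partial_pos: "(\<Sum>k\<le>m. sg k) > 0"
proof (induction m)
  case 0
  then show ?case by (simp add: sg_def bc_def)
next
  case (Suc m)
  have "(\<Sum>k\<le>Suc m. sg k) = (\<Sum>k\<le>m. sg k) * (1 - 1 / (2 * real m + 2))"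
    using sg_rec[of m] by (simp add: field_simps)
  moreover have "1 - 1 / (2 * real m + 2) > 0" by (simp add: field_simps)
  ultimately show ?case using Suc by simp
qed

lemma sg_neg: "k \<ge> 1 \<Longrightarrow> sg k < 0"
proof -
  assume "k \<ge> 1"
  then obtain m where "k = Suc m" by (cases k) auto
  then show ?thesis using sg_rec[of m] sg_partial_pos[of m]
    by (simp add: divide_pos_pos)
qed

lemma abs_bc: "k \<ge> 1 \<Longrightarrow> \<bar>bc k\<bar> = - sg k"
proof -
  assume k: "k \<ge> 1"
  have "\<bar>sg k\<bar> = \<bar>bc k\<bar>" by (simp add: sg_def abs_mult)
  then show ?thesis using sg_neg[OF k] by simp
qed

lemma abs_bc_partial: "(\<Sum>k<n. \<bar>bc k\<bar>) \<le> 2"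
proof (cases n)
  case 0 then show ?thesis by simp
next
  case (Suc m)
  have "(\<Sum>k\<le>m. \<bar>bc k\<bar>) = 2 - (\<Sum>k\<le>m. sg k)"
  proof (induction m)
    case 0 then show ?case by (simp add: sg_def bc_def)
  next
    case (Suc m)
    then show ?case using abs_bc[of "Suc m"] by simp
  qed
  then show ?thesis using Suc sg_partial_pos[of m] by (simp add: lessThan_Suc_atMost)
qed

lemma summable_abs_bc: "summable (\<lambda>k. \<bar>bc k\<bar>)"
  by (rule summableI_nonneg_bounded[where x=2]) (auto simp: abs_bc_partial)



context chilbert
begin

abbreviation nrm where "nrm x \<equiv> hnorm ip x"

lemma sc_zero_left[simp]: "sc 0 x = 0"
proof -
  have "sc (0 + 0) x = sc 0 x + sc 0 x" by (rule sc_add_left)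
  then show ?thesis by simp
qed

lemma sc_zero_right[simp]: "sc a 0 = 0"
proof -
  have "sc a (0 + 0) = sc a 0 + sc a 0" by (rule sc_add_right)
  then show ?thesis by simp
qed

lemma sc_minus_right: "sc a (- x) = - sc a x"
proof -
  have "sc a (x + - x) = sc a x + sc a (- x)" by (rule sc_add_right)
  then show ?thesis by (simp add: eq_neg_iff_add_eq_0 add.commute)
qed

lemma sc_diff_right: "sc a (x - y) = sc a x - sc a y"
  using sc_add_right[of a x "- y"] by (simp add: sc_minus_right)

lemma sc_minus_left: "sc (- a) x = - sc a x"
proof -
  have "sc (a + - a) x = sc a x + sc (- a) x" by (rule sc_add_left)
  then show ?thesis by (simp add: eq_neg_iff_add_eq_0 add.commute)
qed

lemma sc_diff_left: "sc (a - b) x = sc a x - sc b x"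
  using sc_add_left[of a "- b" x] by (simp add: sc_minus_left)

lemma sc_sum_right: "sc a (\<Sum>i\<in>A. f i) = (\<Sum>i\<in>A. sc a (f i))"
  by (induction A rule: infinite_finite_induct) (auto simp: sc_add_right)

lemma sc_sum_left: "sc (\<Sum>i\<in>A. f i) x = (\<Sum>i\<in>A. sc (f i) x)"
  by (induction A rule: infinite_finite_induct) (auto simp: sc_add_left)

lemma ip_zero_right[simp]: "ip x 0 = 0"
proof -
  have "ip x (0 + 0) = ip x 0 + ip x 0" by (rule ip_add_right)
  then show ?thesis by simp
qed

lemma ip_add_left: "ip (x + y) z = ip x z + ip y z"
  by (metis ip_sym ip_add_right complex_cnj_add)

lemma ip_sc_left: "ip (sc a x) y = cnj a * ip x y"
  by (metis ip_sym ip_sc_right complex_cnj_mult)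

lemma ip_zero_left[simp]: "ip 0 x = 0"
  by (metis ip_sym ip_zero_right complex_cnj_zero)

lemma ip_minus_right: "ip x (- y) = - ip x y"
  using ip_add_right[of x y "- y"] by (simp add: eq_neg_iff_add_eq_0 add.commute)

lemma ip_minus_left: "ip (- x) y = - ip x y"
  by (metis ip_sym ip_minus_right complex_cnj_minus)

lemma ip_diff_right: "ip x (y - z) = ip x y - ip x z"
  using ip_add_right[of x y "- z"] by (simp add: ip_minus_right)

lemma ip_diff_left: "ip (x - y) z = ip x z - ip y z"
  using ip_add_left[of x "- y" z] by (simp add: ip_minus_left)

lemma ip_sum_right: "ip x (\<Sum>i\<in>A. f i) = (\<Sum>i\<in>A. ip x (f i))"
  by (induction A rule: infinite_finite_induct) (auto simp: ip_add_right)

lemma ip_sum_left: "ip (\<Sum>i\<in>A. f i) x = (\<Sum>i\<in>A. ip (f i) x)"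
  by (induction A rule: infinite_finite_induct) (auto simp: ip_add_left)

lemma ip_self_Im: "Im (ip x x) = 0"
proof -
  have "Im (ip x x) = - Im (ip x x)" using arg_cong[OF ip_sym[of x x], of Im] by simp
  then show ?thesis by simp
qed

lemma ip_self_real: "ip x x = complex_of_real (Re (ip x x))"
  using ip_self_Im by (simp add: complex_eq_iff)

lemma ip_self_nonneg: "Re (ip x x) \<ge> 0"
proof (cases "x = 0")
  case True then show ?thesis by simp
next
  case False then show ?thesis using ip_pos[OF False] by simp
qed

lemma nrm_nonneg[simp]: "nrm x \<ge> 0"
  by (simp add: hnorm_def ip_self_nonneg)

lemma nrm_sq: "(nrm x)^2 = Re (ip x x)"
  by (simp add: hnorm_def ip_self_nonneg)

lemma nrm_zero_iff[simp]: "nrm x = 0 \<longleftrightarrow> x = 0"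
proof
  assume "nrm x = 0"
  then have "Re (ip x x) = 0" using ip_self_nonneg[of x] by (simp add: hnorm_def)
  then show "x = 0" using ip_pos[of x] by (cases "x = 0") auto
qed (simp add: hnorm_def)

lemma nrm_zero[simp]: "nrm 0 = 0" by simp

lemma nrm_sc: "nrm (sc a x) = cmod a * nrm x"
proof -
  have "Re (ip (sc a x) (sc a x)) = (cmod a)^2 * Re (ip x x)"
    using ip_self_real[of x]
    by (simp add: ip_sc_left ip_sc_right mult.assoc[symmetric] complex_norm_square[symmetric])
  then show ?thesis
    by (simp add: hnorm_def real_sqrt_mult)
qed

lemma nrm_minus: "nrm (- x) = nrm x"
  by (simp add: hnorm_def ip_minus_left ip_minus_right)

lemma nrm_diff_commute: "nrm (x - y) = nrm (y - x)"
  by (metis minus_diff_eq nrm_minus)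

lemma cauchy_schwarz: "cmod (ip x y) \<le> nrm x * nrm y"
proof (cases "y = 0")
  case True then show ?thesis by simp
next
  case False
  define r where "r = Re (ip y y)"
  have r: "r > 0" using ip_pos[OF False] by (simp add: r_def)
  have ryy: "ip y y = of_real r" using ip_self_real[of y] by (simp add: r_def)
  define w where "w = ip x y"
  have yx: "ip y x = cnj w" using ip_sym[of x y] by (simp add: w_def)
  define t where "t = cnj w / of_real r"
  have "ip (x - sc t y) (x - sc t y)
      = ip x x - t * w - cnj t * cnj w + cnj t * t * of_real r"
    by (simp add: ip_diff_left ip_diff_right ip_sc_left ip_sc_right w_def[symmetric] yx ryy
        algebra_simps)
  also have "\<dots> = ip x x - w * cnj w / of_real r"
    using r by (simp add: t_def field_simps)
  also have "\<dots> = ip x x - of_real ((cmod w)^2 / r)"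
    using complex_norm_square[of w] by simp
  finally have "Re (ip x x) - (cmod w)^2 / r \<ge> 0"
    using ip_self_nonneg[of "x - sc t y"] by simp
  then have "(cmod w)^2 \<le> Re (ip x x) * r" using r by (simp add: field_simps)
  also have "\<dots> = (nrm x * nrm y)^2" by (simp add: power_mult_distrib nrm_sq r_def)
  finally show ?thesis unfolding w_def
    by (rule power2_le_imp_le) simp
qed

lemma nrm_triangle: "nrm (x + y) \<le> nrm x + nrm y"
proof -
  have "Re (ip x y) \<le> nrm x * nrm y"
    using cauchy_schwarz[of x y] complex_Re_le_cmod order_trans by blast
  moreover have "Re (ip y x) = Re (ip x y)" using ip_sym[of x y] by simp
  ultimately have "(nrm (x + y))^2 = (nrm x)^2 + 2 * Re (ip x y) + (nrm y)^2"
    by (simp add: nrm_sq ip_add_left ip_add_right)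
  moreover have "(nrm x + nrm y)^2 = (nrm x)^2 + 2 * (nrm x * nrm y) + (nrm y)^2"
    by (simp add: power2_sum)
  ultimately have "(nrm (x + y))^2 \<le> (nrm x + nrm y)^2"
    using \<open>Re (ip x y) \<le> nrm x * nrm y\<close> by linarith
  then show ?thesis
    by (rule power2_le_imp_le) simp
qed

lemma nrm_diff_triangle: "nrm (x - y) \<le> nrm x + nrm y"
  using nrm_triangle[of x "- y"] by (simp add: nrm_minus)

lemma nrm_rev_triangle: "\<bar>nrm x - nrm y\<bar> \<le> nrm (x - y)"
proof -
  have "nrm x \<le> nrm (x - y) + nrm y" using nrm_triangle[of "x - y" y] by simp
  moreover have "nrm y \<le> nrm (x - y) + nrm x"
    using nrm_triangle[of "y - x" x] by (simp add: nrm_diff_commute)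
  ultimately show ?thesis by linarith
qed

lemma nrm_sum: "nrm (\<Sum>i\<in>A. f i) \<le> (\<Sum>i\<in>A. nrm (f i))"
proof (induction A rule: infinite_finite_induct)
  case (insert a A)
  then show ?case using nrm_triangle[of "f a" "sum f A"] by simp
qed auto

end



lemma squeeze0: "(\<And>n. 0 \<le> f n) \<Longrightarrow> (\<And>n. f n \<le> g n) \<Longrightarrow> g \<longlonglongrightarrow> 0 \<Longrightarrow> f \<longlonglongrightarrow> (0::real)"
  by (rule tendsto_sandwich[of "\<lambda>_. 0" f sequentially g]) auto

context chilbert
begin

definition hlim :: "(nat \<Rightarrow> 'h) \<Rightarrow> 'h \<Rightarrow> bool" where
  "hlim X L \<longleftrightarrow> (\<lambda>n. nrm (X n - L)) \<longlonglongrightarrow> 0"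

definition addv :: "('h \<Rightarrow> 'h) \<Rightarrow> bool" where
  "addv T \<longleftrightarrow> (\<forall>x y. T (x + y) = T x + T y)"
definition bnd :: "('h \<Rightarrow> 'h) \<Rightarrow> real \<Rightarrow> bool" where
  "bnd T K \<longleftrightarrow> (\<forall>x. nrm (T x) \<le> K * nrm x)"
definition rhom :: "('h \<Rightarrow> 'h) \<Rightarrow> bool" where
  "rhom T \<longleftrightarrow> (\<forall>(r::real) x. T (sc (of_real r) x) = sc (of_real r) (T x))"
definition chom :: "('h \<Rightarrow> 'h) \<Rightarrow> bool" where
  "chom T \<longleftrightarrow> (\<forall>a x. T (sc a x) = sc a (T x))"
definition sadj :: "('h \<Rightarrow> 'h) \<Rightarrow> bool" where
  "sadj T \<longleftrightarrow> (\<forall>x y. ip (T x) y = ip x (T y))"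
definition cm :: "('h \<Rightarrow> 'h) \<Rightarrow> ('h \<Rightarrow> 'h) \<Rightarrow> bool" where
  "cm B T \<longleftrightarrow> (\<forall>x. B (T x) = T (B x))"

lemma chom_rhom: "chom T \<Longrightarrow> rhom T"
  by (simp add: chom_def rhom_def)

lemma addv_zero: "addv T \<Longrightarrow> T 0 = 0"
  unfolding addv_def by (metis add_cancel_right_right add_0)

lemma addv_minus: "addv T \<Longrightarrow> T (- x) = - T x"
  using addv_zero[of T] unfolding addv_def
  by (metis add.right_inverse eq_neg_iff_add_eq_0)

lemma addv_diff: "addv T \<Longrightarrow> T (x - y) = T x - T y"
  using addv_minus[of T y] unfolding addv_def by (metis diff_conv_add_uminus)

lemma addv_sum: "addv T \<Longrightarrow> T (\<Sum>i\<in>A. f i) = (\<Sum>i\<in>A. T (f i))"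
  by (induction A rule: infinite_finite_induct) (auto simp: addv_zero addv_def)

lemma hlim_unique: assumes "hlim X L" "hlim X M" shows "L = M"
proof -
  have "(\<lambda>n. nrm (X n - L) + nrm (X n - M)) \<longlonglongrightarrow> 0"
    using assms tendsto_add[of _ 0 sequentially _ 0] unfolding hlim_def by fastforce
  moreover have "\<And>n. nrm (L - M) \<le> nrm (X n - L) + nrm (X n - M)"
  proof -
    fix n
    have "L - M = (X n - M) - (X n - L)" by simp
    then have "nrm (L - M) \<le> nrm (X n - M) + nrm (X n - L)"
      using nrm_diff_triangle by metis
    then show "nrm (L - M) \<le> nrm (X n - L) + nrm (X n - M)" by simp
  qed
  ultimately have "nrm (L - M) \<le> 0"
    by (intro tendsto_le[of sequentially _ 0 "\<lambda>_. nrm (L - M)"]) auto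
  then show ?thesis using nrm_nonneg[of "L - M"] by simp
qed

lemma hlim_const: "hlim (\<lambda>n. x) x"
  by (simp add: hlim_def)

lemma hlim_add: assumes "hlim X L" "hlim Y M" shows "hlim (\<lambda>n. X n + Y n) (L + M)"
  unfolding hlim_def
proof (rule squeeze0)
  show "(\<lambda>n. nrm (X n - L) + nrm (Y n - M)) \<longlonglongrightarrow> 0"
    using assms tendsto_add[of _ 0 sequentially _ 0] unfolding hlim_def by fastforce
  fix n show "nrm (X n + Y n - (L + M)) \<le> nrm (X n - L) + nrm (Y n - M)"
    using nrm_triangle[of "X n - L" "Y n - M"] by (simp add: algebra_simps)
qed simp

lemma hlim_sc: assumes "hlim X L" shows "hlim (\<lambda>n. sc a (X n)) (sc a L)"
  unfolding hlim_def
proof -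
  have "(\<lambda>n. cmod a * nrm (X n - L)) \<longlonglongrightarrow> 0"
    using assms tendsto_mult_right_zero unfolding hlim_def by blast
  then show "(\<lambda>n. nrm (sc a (X n) - sc a L)) \<longlonglongrightarrow> 0"
    by (simp add: sc_diff_right[symmetric] nrm_sc)
qed

lemma hlim_minus: assumes "hlim X L" shows "hlim (\<lambda>n. - X n) (- L)"
proof -
  have "\<And>n. nrm (- X n - - L) = nrm (X n - L)"
    using nrm_diff_commute by (metis diff_minus_eq_add minus_diff_eq uminus_add_conv_diff)
  then show ?thesis using assms unfolding hlim_def by simp
qed

lemma hlim_diff: assumes "hlim X L" "hlim Y M" shows "hlim (\<lambda>n. X n - Y n) (L - M)"
  using hlim_add[OF assms(1) hlim_minus[OF assms(2)]] by simp

lemma hlim_Suc: assumes "hlim X L" shows "hlim (\<lambda>n. X (Suc n)) L"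
  using assms unfolding hlim_def by (rule LIMSEQ_Suc)

lemma hlim_nrm: assumes "hlim X L" shows "(\<lambda>n. nrm (X n)) \<longlonglongrightarrow> nrm L"
proof -
  have "(\<lambda>n. nrm (X n) - nrm L) \<longlonglongrightarrow> 0"
    apply (rule tendsto_rabs_zero_cancel)
    apply (rule squeeze0[where g="\<lambda>n. nrm (X n - L)"])
    using assms nrm_rev_triangle unfolding hlim_def by auto
  then show ?thesis by (simp add: LIM_zero_iff)
qed

lemma hlim_ip_left: assumes "hlim X L" shows "(\<lambda>n. ip (X n) y) \<longlonglongrightarrow> ip L y"
proof -
  have "(\<lambda>n. cmod (ip (X n) y - ip L y)) \<longlonglongrightarrow> 0"
  proof (rule squeeze0)
    show "(\<lambda>n. nrm (X n - L) * nrm y) \<longlonglongrightarrow> 0"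
      using assms tendsto_mult_left_zero unfolding hlim_def by blast
    fix n show "cmod (ip (X n) y - ip L y) \<le> nrm (X n - L) * nrm y"
      using cauchy_schwarz[of "X n - L" y] by (simp add: ip_diff_left)
  qed simp
  then show ?thesis by (simp add: tendsto_norm_zero_iff LIM_zero_iff)
qed

lemma hlim_ip_right: assumes "hlim X L" shows "(\<lambda>n. ip y (X n)) \<longlonglongrightarrow> ip y L"
proof -
  have "(\<lambda>n. cnj (ip (X n) y)) \<longlonglongrightarrow> cnj (ip L y)"
    using hlim_ip_left[OF assms] by (rule tendsto_cnj)
  moreover have "(\<lambda>n. cnj (ip (X n) y)) = (\<lambda>n. ip y (X n))"
    by (rule ext) (rule ip_sym[symmetric])
  moreover have "cnj (ip L y) = ip y L" by (rule ip_sym[symmetric])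
  ultimately show ?thesis by simp
qed

lemma hlim_le: assumes "hlim X L" "\<And>n. nrm (X n) \<le> c" shows "nrm L \<le> c"
  using hlim_nrm[OF assms(1)] assms(2) by (intro tendsto_le[of sequentially "\<lambda>_. c" c "\<lambda>n. nrm (X n)" "nrm L"]) auto

lemma hlim_exists:
  assumes "\<And>e. e > 0 \<Longrightarrow> \<exists>N. \<forall>m\<ge>N. \<forall>n\<ge>N. nrm (X m - X n) < e"
  shows "\<exists>L. hlim X L"
  using complete[of X] assms unfolding hlim_def by blast

lemma hlim_op:
  assumes "addv T" "bnd T K" "hlim X L"
  shows "hlim (\<lambda>n. T (X n)) (T L)"
  unfolding hlim_def
proof (rule squeeze0)
  show "(\<lambda>n. K * nrm (X n - L)) \<longlonglongrightarrow> 0"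
    using assms(3) tendsto_mult_right_zero unfolding hlim_def by blast
  fix n show "nrm (T (X n) - T L) \<le> K * nrm (X n - L)"
    using assms(1,2) by (simp add: addv_diff[symmetric] bnd_def)
qed simp

lemma hlim_sum: "finite A \<Longrightarrow> (\<And>i. i \<in> A \<Longrightarrow> hlim (X i) (L i)) \<Longrightarrow> hlim (\<lambda>n. \<Sum>i\<in>A. X i n) (\<Sum>i\<in>A. L i)"
proof (induction A rule: finite_induct)
  case empty then show ?case using hlim_const[of 0] by simp
next
  case (insert a A)
  then have "hlim (\<lambda>n. X a n + (\<Sum>i\<in>A. X i n)) (L a + (\<Sum>i\<in>A. L i))"
    by (intro hlim_add) auto
  then show ?case using insert by simp
qed

end



context chilbert
begin

lemma pow_addv: "addv T \<Longrightarrow> addv (T ^^ k)"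
  by (induction k) (auto simp: addv_def)

lemma pow_chom: "chom T \<Longrightarrow> chom (T ^^ k)"
  by (induction k) (auto simp: chom_def)

lemma pow_rhom: "rhom T \<Longrightarrow> rhom (T ^^ k)"
  by (induction k) (auto simp: rhom_def)

lemma pow_sadj: "sadj T \<Longrightarrow> sadj (T ^^ k)"
  by (induction k) (auto simp: sadj_def funpow_swap1)

lemma pow_bnd1: "bnd T 1 \<Longrightarrow> nrm ((T ^^ k) x) \<le> nrm x"
proof (induction k)
  case (Suc k)
  then show ?case unfolding bnd_def using order_trans by fastforce
qed simp

lemma pow_cm: "cm B T \<Longrightarrow> cm B (T ^^ k)"
  by (induction k) (auto simp: cm_def)

lemma bnd_mono: "bnd T K \<Longrightarrow> K \<le> K' \<Longrightarrow> bnd T K'"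
  unfolding bnd_def by (meson mult_right_mono nrm_nonneg order_trans)

definition Fn :: "('h \<Rightarrow> 'h) \<Rightarrow> nat \<Rightarrow> 'h \<Rightarrow> 'h" where
  "Fn E n x = (\<Sum>k<n. sc (of_real (bc k)) ((E ^^ k) x))"

definition Fsq :: "('h \<Rightarrow> 'h) \<Rightarrow> 'h \<Rightarrow> 'h" where
  "Fsq E x = (SOME L. hlim (\<lambda>n. Fn E n x) L)"

lemma Fn_addv: "addv E \<Longrightarrow> addv (Fn E n)"
  using pow_addv[of E] unfolding addv_def Fn_def
  by (simp add: sc_add_right sum.distrib)

lemma Fn_chom: "chom E \<Longrightarrow> chom (Fn E n)"
  using pow_chom[of E] unfolding chom_def Fn_def
  by (simp add: sc_sum_right sc_assoc mult.commute)

lemma Fn_sadj: "sadj E \<Longrightarrow> sadj (Fn E n)"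
  using pow_sadj[of E] unfolding sadj_def Fn_def
  by (simp add: ip_sum_left ip_sum_right ip_sc_left ip_sc_right)

lemma Fn_bnd: assumes "bnd E 1" shows "bnd (Fn E n) 2"
  unfolding bnd_def
proof
  fix x
  have "nrm (Fn E n x) \<le> (\<Sum>k<n. nrm (sc (of_real (bc k)) ((E ^^ k) x)))"
    unfolding Fn_def by (rule nrm_sum)
  also have "\<dots> \<le> (\<Sum>k<n. \<bar>bc k\<bar> * nrm x)"
    by (intro sum_mono) (simp add: nrm_sc mult_left_mono pow_bnd1[OF assms])
  also have "\<dots> = (\<Sum>k<n. \<bar>bc k\<bar>) * nrm x" by (simp add: sum_distrib_right)
  also have "\<dots> \<le> 2 * nrm x" by (intro mult_right_mono abs_bc_partial) simp
  finally show "nrm (Fn E n x) \<le> 2 * nrm x" .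
qed

lemma Fn_cm: assumes "addv B" "rhom B" "cm B E" shows "cm B (Fn E n)"
  using pow_cm[OF assms(3)] assms(1,2) unfolding cm_def Fn_def rhom_def
  by (simp add: addv_sum)

lemma Fn_diff: assumes "bnd E 1" "n \<le> m"
  shows "nrm (Fn E m x - Fn E n x) \<le> (\<Sum>k\<in>{n..<m}. \<bar>bc k\<bar>) * nrm x"
proof -
  have "Fn E m x - Fn E n x = (\<Sum>k\<in>{n..<m}. sc (of_real (bc k)) ((E ^^ k) x))"
    unfolding Fn_def lessThan_atLeast0 using assms(2) by (simp add: sum_diff_nat_ivl)
  also have "nrm \<dots> \<le> (\<Sum>k\<in>{n..<m}. nrm (sc (of_real (bc k)) ((E ^^ k) x)))"
    by (rule nrm_sum)
  also have "\<dots> \<le> (\<Sum>k\<in>{n..<m}. \<bar>bc k\<bar> * nrm x)"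
    by (intro sum_mono) (simp add: nrm_sc mult_left_mono pow_bnd1[OF assms(1)])
  finally show ?thesis by (simp add: sum_distrib_right)
qed

lemma Fn_conv: assumes "bnd E 1" shows "hlim (\<lambda>n. Fn E n x) (Fsq E x)"
proof -
  have "\<exists>L. hlim (\<lambda>n. Fn E n x) L"
  proof (rule hlim_exists)
    fix e :: real assume e: "e > 0"
    define e' where "e' = e / (nrm x + 1)"
    have "nrm x + 1 > 0" using nrm_nonneg[of x] by linarith
    then have e': "e' > 0" using e by (simp add: e'_def)
    obtain N where N: "\<And>m n. m \<ge> N \<Longrightarrow> norm (\<Sum>k\<in>{m..<n}. \<bar>bc k\<bar>) < e'"
      using summable_abs_bc e' unfolding summable_Cauchy by blast
    have "nrm (Fn E m x - Fn E n x) < e" if mn: "m \<ge> N" "n \<ge> N" for m n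
    proof -
      have key: "nrm (Fn E q x - Fn E p x) < e" if "p \<ge> N" "p \<le> q" for p q
      proof -
        have s: "(\<Sum>k\<in>{p..<q}. \<bar>bc k\<bar>) < e'" using N[OF \<open>p \<ge> N\<close>, of q]
          by (simp add: sum_nonneg)
        have "nrm (Fn E q x - Fn E p x) \<le> (\<Sum>k\<in>{p..<q}. \<bar>bc k\<bar>) * nrm x"
          by (rule Fn_diff[OF assms \<open>p \<le> q\<close>])
        also have "\<dots> \<le> e' * nrm x" using s by (intro mult_right_mono) auto
        also have "\<dots> < e"
        proof -
          have "nrm x / (nrm x + 1) < 1" using \<open>nrm x + 1 > 0\<close> by simp
          then have "e * (nrm x / (nrm x + 1)) < e * 1"
            using e by (intro mult_strict_left_mono) auto
          then show ?thesis by (simp add: e'_def)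
        qed
        finally show ?thesis .
      qed
      show ?thesis
      proof (cases "n \<le> m")
        case True then show ?thesis using key[of n m] mn by simp
      next
        case False then show ?thesis using key[of m n] mn by (simp add: nrm_diff_commute)
      qed
    qed
    then show "\<exists>N. \<forall>m\<ge>N. \<forall>n\<ge>N. nrm (Fn E m x - Fn E n x) < e" by blast
  qed
  then show ?thesis unfolding Fsq_def by (rule someI_ex)
qed

lemma Fsq_addv: assumes "addv E" "bnd E 1" shows "addv (Fsq E)"
  unfolding addv_def
proof (intro allI)
  fix x y
  have "hlim (\<lambda>n. Fn E n x + Fn E n y) (Fsq E x + Fsq E y)"
    by (intro hlim_add Fn_conv assms)
  moreover have "(\<lambda>n. Fn E n x + Fn E n y) = (\<lambda>n. Fn E n (x + y))"
    using Fn_addv[OF assms(1)] unfolding addv_def by simp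
  ultimately have "hlim (\<lambda>n. Fn E n (x + y)) (Fsq E x + Fsq E y)" by simp
  then show "Fsq E (x + y) = Fsq E x + Fsq E y"
    by (rule hlim_unique[OF Fn_conv[OF assms(2)]])
qed

lemma Fsq_chom: assumes "chom E" "bnd E 1" shows "chom (Fsq E)"
  unfolding chom_def
proof (intro allI)
  fix a x
  have "hlim (\<lambda>n. sc a (Fn E n x)) (sc a (Fsq E x))"
    by (intro hlim_sc Fn_conv assms)
  moreover have "(\<lambda>n. sc a (Fn E n x)) = (\<lambda>n. Fn E n (sc a x))"
    using Fn_chom[OF assms(1)] unfolding chom_def by simp
  ultimately have "hlim (\<lambda>n. Fn E n (sc a x)) (sc a (Fsq E x))" by simp
  then show "Fsq E (sc a x) = sc a (Fsq E x)"
    by (rule hlim_unique[OF Fn_conv[OF assms(2)]])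
qed

lemma Fsq_sadj: assumes "sadj E" "bnd E 1" shows "sadj (Fsq E)"
  unfolding sadj_def
proof (intro allI)
  fix x y
  have "(\<lambda>n. ip (Fn E n x) y) \<longlonglongrightarrow> ip (Fsq E x) y"
    by (intro hlim_ip_left Fn_conv assms)
  moreover have "(\<lambda>n. ip (Fn E n x) y) = (\<lambda>n. ip x (Fn E n y))"
    using Fn_sadj[OF assms(1)] unfolding sadj_def by simp
  moreover have "(\<lambda>n. ip x (Fn E n y)) \<longlonglongrightarrow> ip x (Fsq E y)"
    by (intro hlim_ip_right Fn_conv assms)
  ultimately show "ip (Fsq E x) y = ip x (Fsq E y)"
    using LIMSEQ_unique by simp
qed

lemma Fsq_bnd: assumes "bnd E 1" shows "bnd (Fsq E) 2"
  unfolding bnd_def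
proof
  fix x show "nrm (Fsq E x) \<le> 2 * nrm x"
  proof (rule hlim_le[OF Fn_conv[OF assms]])
    fix n show "nrm (Fn E n x) \<le> 2 * nrm x" using Fn_bnd[OF assms] unfolding bnd_def by blast
  qed
qed

lemma Fsq_cm: assumes "addv B" "rhom B" "bnd B K" "cm B E" "bnd E 1" shows "cm B (Fsq E)"
  unfolding cm_def
proof
  fix x
  have "hlim (\<lambda>n. B (Fn E n x)) (B (Fsq E x))"
    by (intro hlim_op[OF assms(1,3)] Fn_conv assms)
  moreover have "(\<lambda>n. B (Fn E n x)) = (\<lambda>n. Fn E n (B x))"
    using Fn_cm[OF assms(1,2,4)] unfolding cm_def by simp
  ultimately have "hlim (\<lambda>n. Fn E n (B x)) (B (Fsq E x))" by simp
  then have "Fsq E (B x) = B (Fsq E x)" by (rule hlim_unique[OF Fn_conv[OF assms(5)]])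
  then show "B (Fsq E x) = Fsq E (B x)" by simp
qed

end



lemma div2_filterlim: "filterlim (\<lambda>n::nat. n div 2) sequentially sequentially"
  unfolding filterlim_at_top eventually_sequentially
proof
  fix Z :: nat show "\<exists>N. \<forall>n\<ge>N. Z \<le> n div 2"
    by (rule exI[of _ "2 * Z"]) auto
qed

lemma partial_div2_lim:
  "(\<lambda>n. \<Sum>i<n div 2. \<bar>bc i\<bar>) \<longlonglongrightarrow> (\<Sum>i. \<bar>bc i\<bar>)"
  using filterlim_compose[OF summable_LIMSEQ[OF summable_abs_bc] div2_filterlim] .

context chilbert
begin

lemma Fn_Fn: assumes "addv E" "chom E"
  shows "Fn E n (Fn E n x) = (\<Sum>i<n. \<Sum>j<n. sc (of_real (bc i * bc j)) ((E ^^ (i + j)) x))"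
proof -
  have "Fn E n (Fn E n x) = (\<Sum>i<n. sc (of_real (bc i)) ((E ^^ i) (\<Sum>j<n. sc (of_real (bc j)) ((E ^^ j) x))))"
    by (simp add: Fn_def)
  also have "\<dots> = (\<Sum>i<n. \<Sum>j<n. sc (of_real (bc i * bc j)) ((E ^^ (i + j)) x))"
    using pow_addv[OF assms(1)] pow_chom[OF assms(2)]
    by (simp add: addv_sum sc_sum_right chom_def sc_assoc funpow_add mult.commute)
  finally show ?thesis .
qed

lemma tri_sum: 
  "(\<Sum>(i,j)\<in>{(i,j). i + j < n}. sc (of_real (bc i * bc j)) ((E ^^ (i + j)) x))
   = (\<Sum>k<n. sc (of_real (if k \<le> 1 then 1 else 0)) ((E ^^ k) x))"
proof -
  have "(\<Sum>(i,j)\<in>{(i,j). i + j < n}. sc (of_real (bc i * bc j)) ((E ^^ (i + j)) x))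
     = (\<Sum>k<n. \<Sum>i\<le>k. sc (of_real (bc i * bc (k - i))) ((E ^^ (i + (k - i))) x))"
    by (rule sum.triangle_reindex)
  also have "\<dots> = (\<Sum>k<n. \<Sum>i\<le>k. sc (of_real (bc i * bc (k - i))) ((E ^^ k) x))"
    by (intro sum.cong refl) auto
  also have "\<dots> = (\<Sum>k<n. sc (of_real (\<Sum>i\<le>k. bc i * bc (k - i))) ((E ^^ k) x))"
    by (simp add: sc_sum_left)
  also have "\<dots> = (\<Sum>k<n. sc (of_real (if k \<le> 1 then 1 else 0)) ((E ^^ k) x))"
    by (simp only: bc_conv)
  finally show ?thesis .
qed

lemma tri_sum2: assumes "n \<ge> 2"
  shows "(\<Sum>k<n. sc (of_real (if k \<le> 1 then 1 else 0)) ((E ^^ k) x)) = x + E x"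
  using assms
proof (induction n)
  case 0 then show ?case by simp
next
  case (Suc n)
  show ?case
  proof (cases "n \<ge> 2")
    case True then show ?thesis using Suc by simp
  next
    case False
    then have "n = 1" using Suc by simp
    then show ?thesis by (simp add: sc_one lessThan_Suc add.commute)
  qed
qed

lemma Fsq_sq: assumes "addv E" "chom E" "bnd E 1"
  shows "Fsq E (Fsq E x) = x + E x"
proof -
  define g where "g = (\<lambda>(i,j). sc (of_real (bc i * bc j)) ((E ^^ (i + j)) x))"
  define G where "G = (\<lambda>(i::nat,j::nat). \<bar>bc i\<bar> * \<bar>bc j\<bar>)"
  define S where "S = (\<lambda>n. \<Sum>i<n. \<bar>bc i\<bar>)"
  define s where "s = (\<Sum>i. \<bar>bc i\<bar>)"
  have lim1: "hlim (\<lambda>n. Fn E n (Fn E n x)) (Fsq E (Fsq E x))"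
    unfolding hlim_def
  proof (rule squeeze0)
    show "(\<lambda>n. 2 * nrm (Fn E n x - Fsq E x) + nrm (Fn E n (Fsq E x) - Fsq E (Fsq E x))) \<longlonglongrightarrow> 0"
      using Fn_conv[OF assms(3), of x] Fn_conv[OF assms(3), of "Fsq E x"] unfolding hlim_def
      by (intro tendsto_add_zero tendsto_mult_right_zero)
    fix n
    have "Fn E n (Fn E n x) - Fsq E (Fsq E x)
        = Fn E n (Fn E n x - Fsq E x) + (Fn E n (Fsq E x) - Fsq E (Fsq E x))"
      using addv_diff[OF Fn_addv[OF assms(1)]] by simp
    then have "nrm (Fn E n (Fn E n x) - Fsq E (Fsq E x))
        \<le> nrm (Fn E n (Fn E n x - Fsq E x)) + nrm (Fn E n (Fsq E x) - Fsq E (Fsq E x))"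
      using nrm_triangle by metis
    moreover have "nrm (Fn E n (Fn E n x - Fsq E x)) \<le> 2 * nrm (Fn E n x - Fsq E x)"
      using Fn_bnd[OF assms(3)] unfolding bnd_def by blast
    ultimately show "nrm (Fn E n (Fn E n x) - Fsq E (Fsq E x))
        \<le> 2 * nrm (Fn E n x - Fsq E x) + nrm (Fn E n (Fsq E x) - Fsq E (Fsq E x))"
      by linarith
  qed simp
  have bound: "nrm (Fn E n (Fn E n x) - (x + E x)) \<le> (S n * S n - S (n div 2) * S (n div 2)) * nrm x"
    if n2: "n \<ge> 2" for n
  proof -
    define box where "box = {..<n} \<times> {..<n}"
    define tri where "tri = {(i,j). i + j < n}"
    define sb where "sb = {..<n div 2} \<times> {..<n div 2}"
    have fin: "finite box" by (simp add: box_def)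
    have tb: "tri \<subseteq> box" by (auto simp: tri_def box_def)
    have st: "sb \<subseteq> tri" by (auto simp: sb_def tri_def)
    have sbb: "sb \<subseteq> box" using st tb by blast
    have "Fn E n (Fn E n x) = sum g box"
      unfolding Fn_Fn[OF assms(1,2)] box_def g_def by (simp add: sum.cartesian_product)
    moreover have "sum g tri = x + E x"
      unfolding g_def tri_def by (rule trans[OF tri_sum tri_sum2[OF n2]])
    ultimately have "Fn E n (Fn E n x) - (x + E x) = sum g (box - tri)"
      using sum_diff[OF fin tb, of g] by simp
    then have "nrm (Fn E n (Fn E n x) - (x + E x)) \<le> (\<Sum>p\<in>box - tri. nrm (g p))"
      using nrm_sum by simp
    also have "\<dots> \<le> (\<Sum>p\<in>box - tri. G p * nrm x)"
    proof (rule sum_mono)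
      fix p assume "p \<in> box - tri"
      obtain i j where p: "p = (i, j)" by fastforce
      have "nrm (g p) = \<bar>bc i * bc j\<bar> * nrm ((E ^^ (i + j)) x)"
        by (simp add: g_def p nrm_sc norm_mult abs_mult)
      also have "\<dots> \<le> \<bar>bc i * bc j\<bar> * nrm x"
        by (intro mult_left_mono pow_bnd1[OF assms(3)]) simp
      finally show "nrm (g p) \<le> G p * nrm x" by (simp add: G_def p abs_mult)
    qed
    also have "\<dots> = (\<Sum>p\<in>box - tri. G p) * nrm x" by (simp add: sum_distrib_right)
    also have "\<dots> \<le> (\<Sum>p\<in>box - sb. G p) * nrm x"
    proof (intro mult_right_mono sum_mono2)
      show "finite (box - sb)" using fin by simp
      show "box - tri \<subseteq> box - sb" using st by blast
    qed (auto simp: G_def)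
    also have "(\<Sum>p\<in>box - sb. G p) = sum G box - sum G sb"
      by (rule sum_diff[OF fin sbb])
    also have "sum G box = S n * S n"
      unfolding S_def box_def G_def by (simp add: sum_product sum.cartesian_product)
    also have "sum G sb = S (n div 2) * S (n div 2)"
      unfolding S_def sb_def G_def by (simp add: sum_product sum.cartesian_product)
    finally show ?thesis .
  qed
  have lim2: "hlim (\<lambda>n. Fn E n (Fn E n x)) (x + E x)"
    unfolding hlim_def
  proof (rule Lim_null_comparison)
    show "\<forall>\<^sub>F n in sequentially. norm (nrm (Fn E n (Fn E n x) - (x + E x)))
            \<le> (S n * S n - S (n div 2) * S (n div 2)) * nrm x"
      unfolding eventually_sequentially using bound by auto
    have "(\<lambda>n. S n) \<longlonglongrightarrow> s" unfolding S_def s_def by (rule summable_LIMSEQ[OF summable_abs_bc])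
    moreover have "(\<lambda>n. S (n div 2)) \<longlonglongrightarrow> s" unfolding S_def s_def by (rule partial_div2_lim)
    ultimately have "(\<lambda>n. (S n * S n - S (n div 2) * S (n div 2)) * nrm x) \<longlonglongrightarrow> (s * s - s * s) * nrm x"
      by (intro tendsto_intros)
    then show "(\<lambda>n. (S n * S n - S (n div 2) * S (n div 2)) * nrm x) \<longlonglongrightarrow> 0" by simp
  qed
  show ?thesis using hlim_unique[OF lim1 lim2] .
qed

end



context chilbert
begin

definition Mp :: "('h \<Rightarrow> 'h) \<Rightarrow> real \<Rightarrow> 'h \<Rightarrow> 'h" where
  "Mp Y K x = x - sc (of_real (1 / (K^2 + 1))) (Y (Y x))"

definition Pk :: "('h \<Rightarrow> 'h) \<Rightarrow> real \<Rightarrow> 'h \<Rightarrow> 'h" where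
  "Pk Y K x = (SOME L. hlim (\<lambda>n. (Mp Y K ^^ (2 * n)) x) L)"

lemma Mp_addv: "addv Y \<Longrightarrow> addv (Mp Y K)"
  unfolding addv_def Mp_def by (simp add: sc_add_right algebra_simps)

lemma Mp_chom: "chom Y \<Longrightarrow> chom (Mp Y K)"
  unfolding chom_def Mp_def by (simp add: sc_diff_right sc_assoc mult.commute)

lemma Mp_sadj: "sadj Y \<Longrightarrow> sadj (Mp Y K)"
  unfolding sadj_def Mp_def by (simp add: ip_diff_left ip_diff_right ip_sc_left ip_sc_right)

lemma Mp_sq: assumes "addv Y" "sadj Y" "bnd Y K"
  shows "(nrm (Mp Y K x))^2 \<le> (nrm x)^2 - (nrm (Y x))^2 / (K^2 + 1)"
proof -
  define c where "c = K^2 + 1"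
  have "K^2 \<ge> 0" by simp
  then have c: "c > 0" unfolding c_def by linarith
  define D where "D = sc (of_real (1 / c)) (Y (Y x))"
  have M: "Mp Y K x = x - D" by (simp add: Mp_def D_def c_def)
  have xD: "ip x D = of_real (1 / c) * ip (Y x) (Y x)"
    using assms(2) by (simp add: D_def ip_sc_right sadj_def)
  have Dx: "ip D x = of_real (1 / c) * ip (Y x) (Y x)"
    using assms(2) by (simp add: D_def ip_sc_left sadj_def)
  have "Re (ip x D) = (nrm (Y x))^2 / c" unfolding xD nrm_sq by simp
  moreover have "Re (ip D x) = (nrm (Y x))^2 / c" unfolding Dx nrm_sq by simp
  moreover have "(nrm D)^2 \<le> (nrm (Y x))^2 / c"
  proof -
    have "nrm (Y (Y x)) \<le> K * nrm (Y x)" using assms(3) by (simp add: bnd_def)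
    then have "(nrm (Y (Y x)))^2 \<le> (K * nrm (Y x))^2" by (intro power_mono) auto
    also have "\<dots> = K^2 * (nrm (Y x))^2" by (simp add: power_mult_distrib)
    also have "\<dots> \<le> c * (nrm (Y x))^2" unfolding c_def by (intro mult_right_mono) auto
    finally have h: "(nrm (Y (Y x)))^2 \<le> c * (nrm (Y x))^2" .
    have cm: "cmod (complex_of_real (1 / c)) = 1 / c" using c by (simp add: norm_divide)
    have "(nrm D)^2 = (nrm (Y (Y x)))^2 / c^2"
      unfolding D_def nrm_sc cm by (simp add: power_divide power_mult_distrib)
    also have "\<dots> \<le> c * (nrm (Y x))^2 / c^2" using h c by (intro divide_right_mono) auto
    also have "\<dots> = (nrm (Y x))^2 / c" using c by (simp add: power2_eq_square)
    finally show ?thesis .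
  qed
  moreover have "(nrm (Mp Y K x))^2 = (nrm x)^2 - Re (ip x D) - Re (ip D x) + (nrm D)^2"
    unfolding M nrm_sq by (simp add: ip_diff_left ip_diff_right)
  ultimately show ?thesis by (simp add: c_def)
qed

lemma Mp_bnd: assumes "addv Y" "sadj Y" "bnd Y K" shows "bnd (Mp Y K) 1"
  unfolding bnd_def
proof
  fix x
  have "(nrm (Mp Y K x))^2 \<le> (nrm x)^2"
  proof -
    have "K^2 + 1 > 0" using zero_le_power2[of K] by linarith
    then have "(nrm (Y x))^2 / (K^2 + 1) \<ge> 0" by (intro divide_nonneg_pos) auto
    then show ?thesis using Mp_sq[OF assms, of x] by linarith
  qed
  then have "nrm (Mp Y K x) \<le> nrm x" by (rule power2_le_imp_le) simp
  then show "nrm (Mp Y K x) \<le> 1 * nrm x" by simp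
qed

lemma pow_ip: assumes "sadj T"
  shows "ip ((T ^^ p) x) ((T ^^ q) y) = ip x ((T ^^ (p + q)) y)"
  using pow_sadj[OF assms, of p] by (simp add: sadj_def funpow_add)

lemma Pk_conv: assumes "addv Y" "sadj Y" "bnd Y K"
  shows "hlim (\<lambda>n. (Mp Y K ^^ (2 * n)) x) (Pk Y K x)"
proof -
  let ?M = "Mp Y K"
  have sM: "sadj ?M" using Mp_sadj[OF assms(2)] .
  have bM: "bnd ?M 1" using Mp_bnd[OF assms] .
  define a where "a = (\<lambda>k. (nrm ((?M ^^ k) x))^2)"
  have a_ip: "a k = Re (ip x ((?M ^^ (k + k)) x))" for k
    unfolding a_def nrm_sq pow_ip[OF sM] ..
  have "decseq a"
  proof (rule decseq_SucI)
    fix k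
    have "nrm ((?M ^^ Suc k) x) \<le> nrm ((?M ^^ k) x)"
      using bM unfolding bnd_def by simp
    then show "a (Suc k) \<le> a k" unfolding a_def by (intro power_mono) auto
  qed
  moreover have "\<forall>i. 0 \<le> a i" by (simp add: a_def)
  ultimately obtain L where aL: "a \<longlonglongrightarrow> L" using decseq_convergent by blast
  have "\<exists>L. hlim (\<lambda>n. (?M ^^ (2 * n)) x) L"
  proof (rule hlim_exists)
    fix e :: real assume e: "e > 0"
    have "e^2 / 4 > 0" using e by simp
    then obtain N where N: "\<And>k. k \<ge> N \<Longrightarrow> \<bar>a k - L\<bar> < e^2 / 4"
      using aL unfolding LIMSEQ_def dist_real_def by blast
    have "nrm ((?M ^^ (2 * m)) x - (?M ^^ (2 * n)) x) < e" if "m \<ge> N" "n \<ge> N" for m n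
    proof -
      have "(nrm ((?M ^^ (2 * m)) x - (?M ^^ (2 * n)) x))^2 = a (2 * m) + a (2 * n) - 2 * a (m + n)"
      proof -
        have e1: "2 * n + 2 * m = (m + n) + (m + n)" "2 * m + 2 * n = (m + n) + (m + n)" by simp_all
        have "Re (ip ((?M ^^ (2 * n)) x) ((?M ^^ (2 * m)) x)) = a (m + n)"
          unfolding pow_ip[OF sM] a_ip e1 ..
        moreover have "Re (ip ((?M ^^ (2 * m)) x) ((?M ^^ (2 * n)) x)) = a (m + n)"
          unfolding pow_ip[OF sM] a_ip e1 ..
        moreover have "Re (ip ((?M ^^ (2 * m)) x) ((?M ^^ (2 * m)) x)) = a (2 * m)"
          unfolding pow_ip[OF sM] a_ip ..
        moreover have "Re (ip ((?M ^^ (2 * n)) x) ((?M ^^ (2 * n)) x)) = a (2 * n)"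
          unfolding pow_ip[OF sM] a_ip ..
        ultimately show ?thesis unfolding nrm_sq ip_diff_left ip_diff_right by simp
      qed
      also have "\<dots> < e^2"
      proof -
        have "\<bar>a (2 * m) - L\<bar> < e^2 / 4" "\<bar>a (2 * n) - L\<bar> < e^2 / 4" "\<bar>a (m + n) - L\<bar> < e^2 / 4"
          using N[of "2 * m"] N[of "2 * n"] N[of "m + n"] that by auto
        then show ?thesis unfolding abs_less_iff by linarith
      qed
      finally have "(nrm ((?M ^^ (2 * m)) x - (?M ^^ (2 * n)) x))^2 < e^2" .
      then show ?thesis by (rule power_less_imp_less_base) (use e in simp)
    qed
    then show "\<exists>N. \<forall>m\<ge>N. \<forall>n\<ge>N. nrm ((?M ^^ (2 * m)) x - (?M ^^ (2 * n)) x) < e" by blast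
  qed
  then show ?thesis unfolding Pk_def by (rule someI_ex)
qed

lemma Pk_addv: assumes "addv Y" "sadj Y" "bnd Y K" shows "addv (Pk Y K)"
  unfolding addv_def
proof (intro allI)
  fix x y
  have "hlim (\<lambda>n. (Mp Y K ^^ (2 * n)) x + (Mp Y K ^^ (2 * n)) y) (Pk Y K x + Pk Y K y)"
    by (intro hlim_add Pk_conv assms)
  moreover have "(\<lambda>n. (Mp Y K ^^ (2 * n)) x + (Mp Y K ^^ (2 * n)) y) = (\<lambda>n. (Mp Y K ^^ (2 * n)) (x + y))"
    using pow_addv[OF Mp_addv[OF assms(1)]] unfolding addv_def by simp
  ultimately have "hlim (\<lambda>n. (Mp Y K ^^ (2 * n)) (x + y)) (Pk Y K x + Pk Y K y)" by simp
  then show "Pk Y K (x + y) = Pk Y K x + Pk Y K y"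
    by (rule hlim_unique[OF Pk_conv[OF assms]])
qed

lemma Pk_chom: assumes "addv Y" "chom Y" "sadj Y" "bnd Y K" shows "chom (Pk Y K)"
  unfolding chom_def
proof (intro allI)
  fix a x
  have "hlim (\<lambda>n. sc a ((Mp Y K ^^ (2 * n)) x)) (sc a (Pk Y K x))"
    by (intro hlim_sc Pk_conv assms)
  moreover have "(\<lambda>n. sc a ((Mp Y K ^^ (2 * n)) x)) = (\<lambda>n. (Mp Y K ^^ (2 * n)) (sc a x))"
    using pow_chom[OF Mp_chom[OF assms(2)]] unfolding chom_def by simp
  ultimately have "hlim (\<lambda>n. (Mp Y K ^^ (2 * n)) (sc a x)) (sc a (Pk Y K x))" by simp
  then show "Pk Y K (sc a x) = sc a (Pk Y K x)"
    by (rule hlim_unique[OF Pk_conv[OF assms(1,3,4)]])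
qed

lemma Pk_sadj: assumes "addv Y" "sadj Y" "bnd Y K" shows "sadj (Pk Y K)"
  unfolding sadj_def
proof (intro allI)
  fix x y
  have "(\<lambda>n. ip ((Mp Y K ^^ (2 * n)) x) y) \<longlonglongrightarrow> ip (Pk Y K x) y"
    by (intro hlim_ip_left Pk_conv assms)
  moreover have "(\<lambda>n. ip ((Mp Y K ^^ (2 * n)) x) y) = (\<lambda>n. ip x ((Mp Y K ^^ (2 * n)) y))"
    using pow_sadj[OF Mp_sadj[OF assms(2)]] unfolding sadj_def by simp
  moreover have "(\<lambda>n. ip x ((Mp Y K ^^ (2 * n)) y)) \<longlonglongrightarrow> ip x (Pk Y K y)"
    by (intro hlim_ip_right Pk_conv assms)
  ultimately show "ip (Pk Y K x) y = ip x (Pk Y K y)"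
    using LIMSEQ_unique by simp
qed

lemma Pk_bnd: assumes "addv Y" "sadj Y" "bnd Y K" shows "bnd (Pk Y K) 1"
  unfolding bnd_def
proof
  fix x show "nrm (Pk Y K x) \<le> 1 * nrm x"
  proof (rule hlim_le[OF Pk_conv[OF assms]])
    fix n show "nrm ((Mp Y K ^^ (2 * n)) x) \<le> 1 * nrm x"
      using pow_bnd1[OF Mp_bnd[OF assms]] by simp
  qed
qed

lemma Pk_fix: assumes "addv Y" "sadj Y" "bnd Y K" shows "Mp Y K (Mp Y K (Pk Y K x)) = Pk Y K x"
proof -
  let ?M = "Mp Y K"
  have aM: "addv ?M" and bM: "bnd ?M 1" using Mp_addv[OF assms(1)] Mp_bnd[OF assms] by auto
  have "hlim (\<lambda>n. ?M (?M ((?M ^^ (2 * n)) x))) (?M (?M (Pk Y K x)))"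
    by (intro hlim_op[OF aM bM] Pk_conv assms)
  moreover have "(\<lambda>n. ?M (?M ((?M ^^ (2 * n)) x))) = (\<lambda>n. (?M ^^ (2 * Suc n)) x)"
    by simp
  moreover have "hlim (\<lambda>n. (?M ^^ (2 * Suc n)) x) (Pk Y K x)"
    using hlim_Suc[OF Pk_conv[OF assms, of x]] .
  ultimately show ?thesis using hlim_unique by metis
qed

lemma Mp_fix_ker: assumes "addv Y" "sadj Y" "bnd Y K" "Mp Y K (Mp Y K z) = z" shows "Y z = 0"
proof -
  define c where "c = K^2 + 1"
  have c: "c > 0" using zero_le_power2[of K] unfolding c_def by linarith
  have 1: "(nrm (Mp Y K z))^2 \<le> (nrm z)^2 - (nrm (Y z))^2 / c"
    using Mp_sq[OF assms(1-3)] by (simp add: c_def)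
  have 2: "(nrm (Mp Y K (Mp Y K z)))^2 \<le> (nrm (Mp Y K z))^2 - (nrm (Y (Mp Y K z)))^2 / c"
    using Mp_sq[OF assms(1-3)] by (simp add: c_def)
  have 3: "(nrm (Y (Mp Y K z)))^2 / c \<ge> 0" using c by simp
  have "(nrm (Y z))^2 / c \<le> 0" using 1 2 3 assms(4) by simp
  then have "(nrm (Y z))^2 \<le> 0" using c by (simp add: divide_le_0_iff)
  then show ?thesis by simp
qed

lemma Mp_ker: assumes "Y z = 0" "addv Y" shows "Mp Y K z = z"
  using assms by (simp add: Mp_def addv_zero)

lemma Pk_ker: assumes "addv Y" "sadj Y" "bnd Y K" "Y z = 0" shows "Pk Y K z = z"
proof -
  have "\<And>k. (Mp Y K ^^ k) z = z"
  proof -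
    fix k show "(Mp Y K ^^ k) z = z"
      by (induction k) (simp_all add: Mp_ker[OF assms(4,1)])
  qed
  then have "hlim (\<lambda>n. (Mp Y K ^^ (2 * n)) z) z" using hlim_const[of z] by simp
  then show ?thesis by (rule hlim_unique[OF Pk_conv[OF assms(1-3)]])
qed

lemma Pk_Y: assumes "addv Y" "sadj Y" "bnd Y K" shows "Y (Pk Y K x) = 0"
  by (rule Mp_fix_ker[OF assms Pk_fix[OF assms]])

lemma Pk_idem: assumes "addv Y" "sadj Y" "bnd Y K" shows "Pk Y K (Pk Y K x) = Pk Y K x"
  by (rule Pk_ker[OF assms Pk_Y[OF assms]])

lemma Pk_annih: assumes "addv Y" "chom Y" "sadj Y" "bnd Y K" "addv T" "bnd T K'" "\<And>x. T (Y x) = 0"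
  shows "T (Pk Y K x) = T x"
proof -
  have TM: "T (Mp Y K x) = T x" for x
  proof -
    have "Mp Y K x = x - Y (sc (of_real (1 / (K^2 + 1))) (Y x))"
      using assms(2) by (simp add: Mp_def chom_def)
    then show ?thesis using assms(7) addv_diff[OF assms(5)] by simp
  qed
  have "T ((Mp Y K ^^ k) x) = T x" for k
    by (induction k) (simp_all add: TM)
  then have "hlim (\<lambda>n. T ((Mp Y K ^^ (2 * n)) x)) (T x)" using hlim_const[of "T x"] by simp
  moreover have "hlim (\<lambda>n. T ((Mp Y K ^^ (2 * n)) x)) (T (Pk Y K x))"
    by (intro hlim_op[OF assms(5,6)] Pk_conv assms)
  ultimately show ?thesis using hlim_unique by metis
qed

lemma Pk_cm: assumes "addv Y" "sadj Y" "bnd Y K" "addv B" "rhom B" "bnd B K'" "cm B Y"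
  shows "cm B (Pk Y K)"
proof -
  have "cm B (Mp Y K)"
    unfolding cm_def
  proof
    fix x
    have r: "B (sc (of_real (1 / (K^2 + 1))) (Y (Y x))) = sc (of_real (1 / (K^2 + 1))) (B (Y (Y x)))"
      using assms(5) unfolding rhom_def by blast
    have y: "B (Y (Y x)) = Y (Y (B x))" using assms(7) unfolding cm_def by simp
    show "B (Mp Y K x) = Mp Y K (B x)"
      unfolding Mp_def addv_diff[OF assms(4)] r y ..
  qed
  then have cmk: "cm B (Mp Y K ^^ k)" for k by (rule pow_cm)
  show ?thesis unfolding cm_def
  proof
    fix x
    have "hlim (\<lambda>n. B ((Mp Y K ^^ (2 * n)) x)) (B (Pk Y K x))"
      by (intro hlim_op[OF assms(4,6)] Pk_conv assms)
    moreover have "(\<lambda>n. B ((Mp Y K ^^ (2 * n)) x)) = (\<lambda>n. (Mp Y K ^^ (2 * n)) (B x))"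
      using cmk unfolding cm_def by simp
    ultimately have "hlim (\<lambda>n. (Mp Y K ^^ (2 * n)) (B x)) (B (Pk Y K x))" by simp
    then have "Pk Y K (B x) = B (Pk Y K x)" by (rule hlim_unique[OF Pk_conv[OF assms(1-3)]])
    then show "B (Pk Y K x) = Pk Y K (B x)" by simp
  qed
qed

end



context chilbert
begin

definition alin :: "('h \<Rightarrow> 'h) \<Rightarrow> bool" where
  "alin J \<longleftrightarrow> (\<forall>a x. J (sc a x) = sc (cnj a) (J x))"

lemma alin_rhom: "alin J \<Longrightarrow> rhom J"
  by (simp add: alin_def rhom_def)

lemma sc_half_double: "sc (1/2) x + sc (1/2) x = x"
  using sc_add_left[of "1/2" "1/2" x, symmetric] by (simp add: sc_one)

lemma sc_ii: "sc \<i> (sc \<i> x) = - x"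
  by (simp add: sc_assoc sc_minus_left sc_one)

lemma sc_two: "sc 2 x = x + x"
  using sc_add_left[of 1 1 x] by (simp add: sc_one)

lemma rhom_sc: assumes "rhom B" shows "B (sc (of_real r) x) = sc (of_real r) (B x)"
  using assms unfolding rhom_def by blast

lemma rhom_half: "rhom B \<Longrightarrow> B (sc (1/2) x) = sc (1/2) (B x)"
  using rhom_sc[of B "1/2" x] by simp

lemma rhom_two: "rhom B \<Longrightarrow> B (sc 2 x) = sc 2 (B x)"
  using rhom_sc[of B 2 x] by simp

lemma cm_sym: "cm B T \<Longrightarrow> cm T B"
  by (simp add: cm_def)

lemma cm_refl: "cm B B"
  by (simp add: cm_def)

lemma iso_bnd: "(\<And>x. nrm (B x) = nrm x) \<Longrightarrow> bnd B 1"
  by (simp add: bnd_def)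

lemma ip_nrm: "(\<And>x y. ip (B x) (B y) = ip x y) \<Longrightarrow> nrm (B x) = nrm x"
  by (simp add: hnorm_def)

lemma sqrt_main:
  assumes aA: "addv A" and cA: "chom A" and iA: "\<And>x y. ip (A x) (A y) = ip x y"
    and aA': "addv A'" and cA': "chom A'" and iA': "\<And>x y. ip (A' x) (A' y) = ip x y"
    and inv1: "\<And>x. A (A' x) = x" and inv2: "\<And>x. A' (A x) = x"
  shows "\<exists>Z Z'. addv Z \<and> chom Z \<and> (\<forall>x y. ip (Z x) (Z y) = ip x y) \<and> (\<forall>x. Z (Z' x) = x)
     \<and> (\<forall>x. Z' (Z x) = x) \<and> (\<forall>x. Z (Z x) = A x)
     \<and> (\<forall>B. addv B \<and> chom B \<and> (\<forall>x. nrm (B x) = nrm x) \<and> cm B A \<and> cm B A' \<longrightarrow> cm B Z)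
     \<and> (\<forall>J. addv J \<and> alin J \<and> (\<forall>x. nrm (J x) = nrm x) \<and> (\<forall>x. J (A x) = A' (J x))
           \<and> (\<forall>x. J (A' x) = A (J x)) \<longrightarrow> (\<forall>x. J (Z x) = Z' (J x)))"
proof -
  define h :: complex where "h = 1/2"
  define C where "C = (\<lambda>x. sc h (A x + A' x))"
  define S where "S = (\<lambda>x. sc (- \<i>/2) (A x - A' x))"
  have adjA: "ip (A x) y = ip x (A' y)" for x y using iA[of x "A' y"] inv1 by simp
  have adjA': "ip (A' x) y = ip x (A y)" for x y using iA'[of x "A y"] inv2 by simp
  have nA: "nrm (A x) = nrm x" for x by (rule ip_nrm[OF iA])
  have nA': "nrm (A' x) = nrm x" for x by (rule ip_nrm[OF iA'])
  have Ad: "A (x - y) = A x - A y" "A' (x - y) = A' x - A' y" for x y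
    using addv_diff[OF aA] addv_diff[OF aA'] by auto
  have Aa: "A (x + y) = A x + A y" "A' (x + y) = A' x + A' y" for x y
    using aA aA' by (auto simp: addv_def)
  have As: "A (sc a x) = sc a (A x)" "A' (sc a x) = sc a (A' x)" for a x
    using cA cA' by (auto simp: chom_def)
  have aC: "addv C" unfolding addv_def C_def by (simp add: Aa sc_add_right algebra_simps)
  have cC: "chom C" unfolding chom_def C_def by (simp add: As sc_add_right sc_assoc mult.commute)
  have sC: "sadj C" unfolding sadj_def C_def
    by (simp add: ip_sc_left ip_sc_right ip_add_left ip_add_right adjA adjA' h_def add.commute)
  have bC: "bnd C 1" unfolding bnd_def
  proof
    fix x
    have "nrm (C x) = 1/2 * nrm (A x + A' x)" by (simp add: C_def nrm_sc h_def)
    also have "\<dots> \<le> 1/2 * (nrm (A x) + nrm (A' x))" using nrm_triangle by simp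
    finally show "nrm (C x) \<le> 1 * nrm x" by (simp add: nA nA')
  qed
  have aS: "addv S" unfolding addv_def S_def by (simp add: Aa sc_add_right sc_diff_right algebra_simps)
  have cS: "chom S" unfolding chom_def S_def by (simp add: As sc_diff_right sc_assoc mult.commute)
  have sS: "sadj S" unfolding sadj_def S_def
    by (simp add: ip_sc_left ip_sc_right ip_diff_left ip_diff_right adjA adjA' algebra_simps)
  have bS: "bnd S 1" unfolding bnd_def
  proof
    fix x
    have "nrm (S x) = 1/2 * nrm (A x - A' x)" by (simp add: S_def nrm_sc norm_divide)
    also have "\<dots> \<le> 1/2 * (nrm (A x) + nrm (A' x))" using nrm_diff_triangle by simp
    finally show "nrm (S x) \<le> 1 * nrm x" by (simp add: nA nA')
  qed
  have iS: "sc \<i> (S x) = sc h (A x - A' x)" for x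
    by (simp add: S_def sc_assoc h_def)
  have AeqCS: "A x = C x + sc \<i> (S x)" for x
  proof -
    have "C x + sc \<i> (S x) = sc h (A x + A' x) + sc h (A x - A' x)"
      by (simp only: C_def iS)
    also have "\<dots> = sc h ((A x + A' x) + (A x - A' x))"
      by (rule sc_add_right[symmetric])
    also have "(A x + A' x) + (A x - A' x) = A x + A x" by simp
    finally show ?thesis by (simp add: sc_add_right h_def sc_half_double)
  qed
  have A'eqCS: "A' x = C x - sc \<i> (S x)" for x
  proof -
    have "C x - sc \<i> (S x) = sc h (A x + A' x) - sc h (A x - A' x)"
      by (simp only: C_def iS)
    also have "\<dots> = sc h ((A x + A' x) - (A x - A' x))"
      by (rule sc_diff_right[symmetric])
    also have "(A x + A' x) - (A x - A' x) = A' x + A' x" by simp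
    finally show ?thesis by (simp add: sc_add_right h_def sc_half_double)
  qed
  have cmCS: "cm B C \<and> cm B S" if aB: "addv B" and cB: "chom B" and cmA: "cm B A" and cmA': "cm B A'" for B
  proof -
    have Bs: "B (sc a x) = sc a (B x)" for a x using cB by (simp add: chom_def)
    have Ba: "B (x + y) = B x + B y" for x y using aB by (simp add: addv_def)
    have Bd: "B (x - y) = B x - B y" for x y using addv_diff[OF aB] .
    have BA: "B (A x) = A (B x)" "B (A' x) = A' (B x)" for x using cmA cmA' by (auto simp: cm_def)
    show ?thesis unfolding cm_def C_def S_def by (simp add: Bs Ba Bd BA)
  qed
  have cmAA': "cm A A'" using inv1 inv2 by (simp add: cm_def)
  have cmAC: "cm A C" and cmAS: "cm A S" using cmCS[OF aA cA cm_refl cmAA'] by auto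
  have cmA'C: "cm A' C" and cmA'S: "cm A' S" using cmCS[OF aA' cA' cm_sym[OF cmAA'] cm_refl] by auto
  have cmSC: "cm S C" using cmCS[OF aS cS cm_sym[OF cmAS] cm_sym[OF cmA'S]] by auto
  have Cd: "C (x - y) = C x - C y" "S (x - y) = S x - S y" for x y
    using addv_diff[OF aC] addv_diff[OF aS] by auto
  have Cs: "C (sc a x) = sc a (C x)" "S (sc a x) = sc a (S x)" for a x
    using cC cS by (auto simp: chom_def)
  have CS: "C (S x) = S (C x)" for x using cmSC by (simp add: cm_def)
  have CCSS: "C (C x) + S (S x) = x" for x
  proof -
    have "x = A (A' x)" by (simp add: inv1)
    also have "\<dots> = C (C x - sc \<i> (S x)) + sc \<i> (S (C x - sc \<i> (S x)))"
      unfolding A'eqCS[of x] by (rule AeqCS)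
    also have "\<dots> = C (C x) - sc \<i> (S (C x)) + (sc \<i> (S (C x)) - sc \<i> (sc \<i> (S (S x))))"
      by (simp add: Cd Cs CS sc_diff_right)
    also have "\<dots> = C (C x) + S (S x)" by (simp add: sc_ii)
    finally show ?thesis by simp
  qed
  define E1 where "E1 = (\<lambda>x. sc h (C x) - sc h x)"
  define E2 where "E2 = (\<lambda>x. - sc h (C x) - sc h x)"
  have Ca: "C (x + y) = C x + C y" for x y using aC by (simp add: addv_def)
  have aE1: "addv E1" unfolding addv_def E1_def by (simp add: Ca sc_add_right algebra_simps)
  have aE2: "addv E2" unfolding addv_def E2_def by (simp add: Ca sc_add_right algebra_simps)
  have cE1: "chom E1" unfolding chom_def E1_def by (simp add: Cs sc_diff_right sc_assoc mult.commute)
  have cE2: "chom E2" unfolding chom_def E2_def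
    by (simp add: Cs sc_diff_right sc_minus_right sc_assoc mult.commute)
  have sCe: "ip (C x) y = ip x (C y)" for x y using sC by (simp add: sadj_def)
  have sE1: "sadj E1" unfolding sadj_def E1_def by (simp add: ip_diff_left ip_diff_right ip_sc_left ip_sc_right sCe h_def)
  have sE2: "sadj E2" unfolding sadj_def E2_def
    by (simp add: ip_diff_left ip_diff_right ip_minus_left ip_minus_right ip_sc_left ip_sc_right sCe h_def)
  have nC: "nrm (C x) \<le> nrm x" for x using bC by (simp add: bnd_def)
  have bE1: "bnd E1 1" unfolding bnd_def
  proof
    fix x
    have "nrm (E1 x) \<le> nrm (sc h (C x)) + nrm (sc h x)" unfolding E1_def by (rule nrm_diff_triangle)
    also have "\<dots> = 1/2 * nrm (C x) + 1/2 * nrm x" by (simp add: nrm_sc h_def)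
    finally show "nrm (E1 x) \<le> 1 * nrm x" using nC[of x] by simp
  qed
  have bE2: "bnd E2 1" unfolding bnd_def
  proof
    fix x
    have "nrm (E2 x) \<le> nrm (- sc h (C x)) + nrm (sc h x)" unfolding E2_def by (rule nrm_diff_triangle)
    also have "\<dots> = 1/2 * nrm (C x) + 1/2 * nrm x" by (simp add: nrm_sc h_def nrm_minus)
    finally show "nrm (E2 x) \<le> 1 * nrm x" using nC[of x] by simp
  qed
  define Ps where "Ps = Fsq E1"
  define Qp where "Qp = Fsq E2"
  have aPs: "addv Ps" unfolding Ps_def by (rule Fsq_addv[OF aE1 bE1])
  have aQp: "addv Qp" unfolding Qp_def by (rule Fsq_addv[OF aE2 bE2])
  have cPs: "chom Ps" unfolding Ps_def by (rule Fsq_chom[OF cE1 bE1])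
  have cQp: "chom Qp" unfolding Qp_def by (rule Fsq_chom[OF cE2 bE2])
  have sPs: "sadj Ps" unfolding Ps_def by (rule Fsq_sadj[OF sE1 bE1])
  have sQp: "sadj Qp" unfolding Qp_def by (rule Fsq_sadj[OF sE2 bE2])
  have bPs: "bnd Ps 2" unfolding Ps_def by (rule Fsq_bnd[OF bE1])
  have bQp: "bnd Qp 2" unfolding Qp_def by (rule Fsq_bnd[OF bE2])
  have hh: "x - sc h x = sc h x" for x using sc_half_double[of x] unfolding h_def
    by (metis add_diff_cancel_right')
  have pPs: "Ps (Ps x) = sc h x + sc h (C x)" for x
  proof -
    have "Ps (Ps x) = x + E1 x" unfolding Ps_def by (rule Fsq_sq[OF aE1 cE1 bE1])
    also have "\<dots> = (x - sc h x) + sc h (C x)" by (simp add: E1_def)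
    finally show ?thesis by (simp add: hh)
  qed
  have qQp: "Qp (Qp x) = sc h x - sc h (C x)" for x
  proof -
    have "Qp (Qp x) = x + E2 x" unfolding Qp_def by (rule Fsq_sq[OF aE2 cE2 bE2])
    also have "\<dots> = (x - sc h x) - sc h (C x)" by (simp add: E2_def)
    finally show ?thesis by (simp add: hh)
  qed
  have cl1: "cm B Ps \<and> cm B Qp" if aB: "addv B" and rB: "rhom B" and bB: "bnd B K" and cmC: "cm B C" for B K
  proof -
    have Bd: "B (x - y) = B x - B y" for x y using addv_diff[OF aB] .
    have Bm: "B (- x) = - B x" for x using addv_minus[OF aB] .
    have BC: "B (C x) = C (B x)" for x using cmC by (simp add: cm_def)
    have "cm B E1" unfolding cm_def E1_def by (simp add: Bd rhom_half[OF rB] h_def BC)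
    moreover have "cm B E2" unfolding cm_def E2_def by (simp add: Bd Bm rhom_half[OF rB] h_def BC)
    ultimately show ?thesis unfolding Ps_def Qp_def
      using Fsq_cm[OF aB rB bB _ bE1] Fsq_cm[OF aB rB bB _ bE2] by blast
  qed
  have cmCPs: "cm C Ps" and cmCQp: "cm C Qp" using cl1[OF aC chom_rhom[OF cC] bC cm_refl] by auto
  have cmSPs: "cm S Ps" and cmSQp: "cm S Qp" using cl1[OF aS chom_rhom[OF cS] bS cmSC] by auto
  have cmQpPs: "cm Qp Ps" using cl1[OF aQp chom_rhom[OF cQp] bQp cm_sym[OF cmCQp]] by auto
  have PsQp: "Ps (Qp x) = Qp (Ps x)" for x using cmQpPs by (simp add: cm_def)
  have Psa: "Ps (x + y) = Ps x + Ps y" "Qp (x + y) = Qp x + Qp y" for x y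
    using aPs aQp by (auto simp: addv_def)
  have Pss: "Ps (sc a x) = sc a (Ps x)" "Qp (sc a x) = sc a (Qp x)" for a x
    using cPs cQp by (auto simp: chom_def)
  have Psd: "Ps (x - y) = Ps x - Ps y" "Qp (x - y) = Qp x - Qp y" for x y
    using addv_diff[OF aPs] addv_diff[OF aQp] by auto
  have sPse: "ip (Ps x) y = ip x (Ps y)" "ip (Qp x) y = ip x (Qp y)" for x y
    using sPs sQp by (auto simp: sadj_def)
  have nPs: "nrm (Ps x) \<le> 2 * nrm x" "nrm (Qp x) \<le> 2 * nrm x" for x
    using bPs bQp by (auto simp: bnd_def)
  define R where "R = (\<lambda>x. sc 2 (Ps (Qp x)))"
  define Y where "Y = (\<lambda>x. R x - S x)"
  have aR: "addv R" unfolding addv_def R_def by (simp add: Psa sc_add_right)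
  have cR: "chom R" unfolding chom_def R_def by (simp add: Pss sc_assoc mult.commute)
  have sR: "sadj R" unfolding sadj_def R_def by (simp add: ip_sc_left ip_sc_right sPse PsQp)
  have bR: "bnd R 8" unfolding bnd_def
  proof
    fix x
    have "nrm (R x) = 2 * nrm (Ps (Qp x))" by (simp add: R_def nrm_sc)
    also have "\<dots> \<le> 2 * (2 * nrm (Qp x))" using nPs(1)[of "Qp x"] by simp
    also have "\<dots> \<le> 2 * (2 * (2 * nrm x))" using nPs(2)[of x] by simp
    finally show "nrm (R x) \<le> 8 * nrm x" by simp
  qed
  have Ra: "R (x + y) = R x + R y" for x y using aR by (simp add: addv_def)
  have Sa: "S (x + y) = S x + S y" for x y using aS by (simp add: addv_def)
  have aY: "addv Y" unfolding addv_def Y_def by (simp add: Ra Sa algebra_simps)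
  have cY: "chom Y" using cR cS unfolding chom_def Y_def by (simp add: sc_diff_right)
  have sY: "sadj Y" using sR sS unfolding sadj_def Y_def by (simp add: ip_diff_left ip_diff_right)
  have bY: "bnd Y 9" unfolding bnd_def
  proof
    fix x
    have "nrm (Y x) \<le> nrm (R x) + nrm (S x)" unfolding Y_def by (rule nrm_diff_triangle)
    also have "\<dots> \<le> 8 * nrm x + 1 * nrm x" using bR bS unfolding bnd_def by (intro add_mono) auto
    finally show "nrm (Y x) \<le> 9 * nrm x" by simp
  qed
  define Pj where "Pj = Pk Y 9"
  have aPj: "addv Pj" unfolding Pj_def by (rule Pk_addv[OF aY sY bY])
  have cPj: "chom Pj" unfolding Pj_def by (rule Pk_chom[OF aY cY sY bY])
  have sPj: "sadj Pj" unfolding Pj_def by (rule Pk_sadj[OF aY sY bY])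
  have bPj: "bnd Pj 1" unfolding Pj_def by (rule Pk_bnd[OF aY sY bY])
  define W where "W = (\<lambda>x. sc 2 (Pj x) - x)"
  define Q where "Q = (\<lambda>x. W (Qp x))"
  have cl2: "cm B Ps \<and> cm B Qp \<and> cm B R \<and> cm B Y \<and> cm B Pj \<and> cm B W \<and> cm B Q"
    if aB: "addv B" and rB: "rhom B" and bB: "bnd B K" and cmC: "cm B C" and cmS: "cm B S" for B K
  proof -
    have Bd: "B (x - y) = B x - B y" for x y using addv_diff[OF aB] .
    have 1: "cm B Ps" and 2: "cm B Qp" using cl1[OF aB rB bB cmC] by auto
    have 3: "cm B R" using 1 2 unfolding cm_def R_def by (simp add: rhom_two[OF rB])
    have 4: "cm B Y" using 3 cmS unfolding cm_def Y_def by (simp add: Bd)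
    have 5: "cm B Pj" unfolding Pj_def by (rule Pk_cm[OF aY sY bY aB rB bB 4])
    have 6: "cm B W" using 5 unfolding cm_def W_def by (simp add: Bd rhom_two[OF rB])
    have 7: "cm B Q" using 6 2 unfolding cm_def Q_def by simp
    show ?thesis using 1 2 3 4 5 6 7 by blast
  qed
  have clC: "cm C R" using cl2[OF aC chom_rhom[OF cC] bC cm_refl cm_sym[OF cmSC]] by auto
  have clS: "cm S R" using cl2[OF aS chom_rhom[OF cS] bS cmSC cm_refl] by auto
  have clPs: "cm Ps W \<and> cm Ps Q"
    using cl2[OF aPs chom_rhom[OF cPs] bPs cm_sym[OF cmCPs] cm_sym[OF cmSPs]] by auto
  have clQp: "cm Qp W" using cl2[OF aQp chom_rhom[OF cQp] bQp cm_sym[OF cmCQp] cm_sym[OF cmSQp]] by auto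
  have clR: "cm R Pj" using cl2[OF aR chom_rhom[OF cR] bR cm_sym[OF clC] cm_sym[OF clS]] by auto
  have sc22hh: "sc 2 (sc 2 (sc h (sc h v))) = v" for v by (simp add: sc_assoc h_def sc_one)
  have RR: "R (R x) = S (S x)" for x
  proof -
    define q where "q = Qp (Qp x)"
    have "R (R x) = sc 2 (sc 2 (Ps (Ps q)))"
      by (simp add: R_def Pss PsQp q_def)
    also have "Ps (Ps q) = sc h (q + C q)" by (simp add: pPs sc_add_right)
    also have "q + C q = sc h (S (S x))"
    proof -
      have "q + C q = (sc h x - sc h (C x)) + (sc h (C x) - sc h (C (C x)))"
        by (simp add: q_def qQp Cd Cs)
      also have "\<dots> = sc h (x - C (C x))" by (simp add: sc_diff_right)
      also have "x - C (C x) = S (S x)" using CCSS[of x] by (metis add_diff_cancel_left')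
      finally show ?thesis .
    qed
    finally show ?thesis by (simp add: sc22hh)
  qed
  have RS: "R (S x) = S (R x)" for x using clS by (simp add: cm_def)
  define T where "T = (\<lambda>x. R x + S x)"
  have aT: "addv T" unfolding addv_def T_def by (simp add: Ra Sa algebra_simps)
  have bT: "bnd T 9" unfolding bnd_def
  proof
    fix x
    have "nrm (T x) \<le> nrm (R x) + nrm (S x)" unfolding T_def by (rule nrm_triangle)
    also have "\<dots> \<le> 8 * nrm x + 1 * nrm x" using bR bS unfolding bnd_def by (intro add_mono) auto
    finally show "nrm (T x) \<le> 9 * nrm x" by simp
  qed
  have TY: "T (Y x) = 0" for x
  proof -
    have Rd: "R (x - y) = R x - R y" for x y using addv_diff[OF aR] .
    show ?thesis by (simp add: T_def Y_def Rd Cd RS RR)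
  qed
  have TPj: "R (Pj x) + S (Pj x) = R x + S x" for x
    using Pk_annih[OF aY cY sY bY aT bT TY] unfolding T_def Pj_def by simp
  have YPj: "R (Pj x) = S (Pj x)" for x
    using Pk_Y[OF aY sY bY, of x] unfolding Y_def Pj_def by simp
  have PjR: "Pj (R x) = R (Pj x)" for x using clR by (simp add: cm_def)
  have WR: "W (R x) = S x" for x
  proof -
    have "W (R x) = (R (Pj x) + R (Pj x)) - R x" by (simp add: W_def PjR sc_two)
    also have "\<dots> = (R (Pj x) + S (Pj x)) - R x" using YPj[of x] by simp
    also have "\<dots> = S x" by (simp add: TPj)
    finally show ?thesis .
  qed
  have Pjs: "Pj (sc a x) = sc a (Pj x)" for a x using cPj by (simp add: chom_def)
  have Pjd: "Pj (x - y) = Pj x - Pj y" for x y using addv_diff[OF aPj] .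
  have Pji: "Pj (Pj x) = Pj x" for x unfolding Pj_def by (rule Pk_idem[OF aY sY bY])
  have WW: "W (W x) = x" for x
    using aPj by (simp add: W_def Pjd Pjs Pji sc_two sc_diff_right sc_add_right addv_def)
  have QpW: "Qp (W x) = W (Qp x)" for x using clQp by (simp add: cm_def)
  have QQ: "Q (Q x) = Qp (Qp x)" for x by (simp add: Q_def QpW WW)
  have PsQ: "Ps (Q x) = Q (Ps x)" for x using clPs by (simp add: cm_def)
  have PsW: "Ps (W x) = W (Ps x)" for x using clPs by (simp add: cm_def)
  have cW: "chom W" unfolding chom_def W_def by (simp add: Pjs sc_diff_right sc_assoc mult.commute)
  have Ws: "W (sc a x) = sc a (W x)" for a x using cW by (simp add: chom_def)
  have S2: "sc 2 (Ps (Q x)) = S x" for x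
  proof -
    have "sc 2 (Ps (Q x)) = W (sc 2 (Ps (Qp x)))" by (simp add: Q_def PsW Ws)
    also have "\<dots> = S x" using WR[of x] by (simp add: R_def)
    finally show ?thesis .
  qed
  have Qa: "Q (x + y) = Q x + Q y" for x y
    using aPj unfolding Q_def W_def by (simp add: Psa addv_def sc_add_right algebra_simps)
  have Qs: "Q (sc a x) = sc a (Q x)" for a x by (simp add: Q_def Pss Ws)
  have aQ: "addv Q" using Qa by (simp add: addv_def)
  have sW: "ip (W x) y = ip x (W y)" for x y
    using sPj by (simp add: W_def sadj_def ip_diff_left ip_diff_right ip_sc_left ip_sc_right)
  have sQ: "ip (Q x) y = ip x (Q y)" for x y by (simp add: Q_def sW sPse QpW)
  define Z where "Z = (\<lambda>x. Ps x + sc \<i> (Q x))"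
  define Z' where "Z' = (\<lambda>x. Ps x - sc \<i> (Q x))"
  have aZ: "addv Z" unfolding addv_def Z_def by (simp add: Psa Qa sc_add_right algebra_simps)
  have cZ: "chom Z" unfolding chom_def Z_def by (simp add: Pss Qs sc_add_right sc_assoc mult.commute)
  have ZZ: "Z (Z x) = A x" for x
  proof -
    have "Z (Z x) = (Ps (Ps x) - Q (Q x)) + sc \<i> (Ps (Q x) + Ps (Q x))"
      by (simp add: Z_def Psa Pss Qa Qs sc_ii PsQ sc_add_right algebra_simps)
    also have "Ps (Ps x) - Q (Q x) = C x"
      by (simp add: pPs QQ qQp h_def sc_half_double)
    also have "Ps (Q x) + Ps (Q x) = S x" using S2[of x] by (simp add: sc_two)
    finally show ?thesis by (simp add: AeqCS)
  qed
  have pq: "Ps (Ps x) + Q (Q x) = x" for x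
    by (simp add: pPs QQ qQp h_def) (metis add.commute add_diff_cancel_left' add_diff_eq sc_half_double)
  have ZZ': "Z (Z' x) = x" for x
  proof -
    have "Z (Z' x) = Ps (Ps x) + Q (Q x)"
      by (simp add: Z_def Z'_def Psa Psd Pss Qa Qs addv_diff[OF aQ] sc_ii PsQ sc_add_right sc_diff_right algebra_simps)
    then show ?thesis by (simp add: pq)
  qed
  have Z'Z: "Z' (Z x) = x" for x
  proof -
    have "Z' (Z x) = Ps (Ps x) + Q (Q x)"
      by (simp add: Z_def Z'_def Psa Psd Pss Qa Qs addv_diff[OF aQ] sc_ii PsQ sc_add_right sc_diff_right algebra_simps)
    then show ?thesis by (simp add: pq)
  qed
  have iZ: "ip (Z x) (Z y) = ip x y" for x y
  proof -
    have "ip (Z x) (Z y) = ip x (Ps (Ps y)) + ip x (Q (Q y))"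
      by (simp add: Z_def ip_add_left ip_add_right ip_sc_left ip_sc_right sPse sQ PsQ algebra_simps)
    also have "\<dots> = ip x y" by (simp add: ip_add_right[symmetric] pq)
    finally show ?thesis .
  qed
  have Bcl: "cm B Z" if hB: "addv B \<and> chom B \<and> (\<forall>x. nrm (B x) = nrm x) \<and> cm B A \<and> cm B A'" for B
  proof -
    have aB: "addv B" and cB: "chom B" and bB: "bnd B 1" and c1: "cm B A" and c2: "cm B A'"
      using hB by (auto intro: iso_bnd)
    have "cm B C \<and> cm B S" by (rule cmCS[OF aB cB c1 c2])
    then have "cm B Ps \<and> cm B Q" using cl2[OF aB chom_rhom[OF cB] bB] by blast
    then show ?thesis using aB cB unfolding cm_def Z_def addv_def chom_def by simp
  qed
  have Jcl: "J (Z x) = Z' (J x)"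
    if hJ: "addv J \<and> alin J \<and> (\<forall>x. nrm (J x) = nrm x) \<and> (\<forall>x. J (A x) = A' (J x))
           \<and> (\<forall>x. J (A' x) = A (J x))" for J x
  proof -
    have aJ: "addv J" and lJ: "alin J" and bJ: "bnd J 1"
      and J1: "\<And>x. J (A x) = A' (J x)" and J2: "\<And>x. J (A' x) = A (J x)"
      using hJ by (auto intro: iso_bnd)
    have Ja: "J (x + y) = J x + J y" for x y using aJ by (simp add: addv_def)
    have Jd: "J (x - y) = J x - J y" for x y using addv_diff[OF aJ] .
    have Js: "J (sc a x) = sc (cnj a) (J x)" for a x using lJ by (simp add: alin_def)
    have cmJC: "cm J C" unfolding cm_def C_def by (simp add: Js Ja J1 J2 h_def add.commute)
    have cmJS: "cm J S" unfolding cm_def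
    proof
      fix x
      have "J (S x) = sc (\<i>/2) (A' (J x) - A (J x))" by (simp add: S_def Js Jd J1 J2)
      also have "\<dots> = sc (- \<i>/2) (A (J x) - A' (J x))"
        by (metis minus_diff_eq minus_divide_left sc_minus_left sc_minus_right)
      finally show "J (S x) = S (J x)" by (simp add: S_def)
    qed
    have "cm J Ps \<and> cm J Q" using cl2[OF aJ alin_rhom[OF lJ] bJ cmJC cmJS] by blast
    then show ?thesis by (simp add: cm_def Z_def Z'_def Ja Js sc_minus_left)
  qed
  show ?thesis
    apply (rule exI[of _ Z], rule exI[of _ Z'])
    using aZ cZ iZ ZZ' Z'Z ZZ Bcl Jcl by blast
qed

end



lemma (in group) comm_inv:
  assumes "a \<in> carrier G" "g \<in> carrier G" "a \<otimes> g = g \<otimes> a"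
  shows "inv a \<otimes> g = g \<otimes> inv a"
proof -
  have "inv a \<otimes> g = inv a \<otimes> g \<otimes> (a \<otimes> inv a)" using assms by (simp add: r_inv)
  also have "\<dots> = inv a \<otimes> (g \<otimes> a) \<otimes> inv a" using assms by (simp add: m_assoc)
  also have "\<dots> = inv a \<otimes> (a \<otimes> g) \<otimes> inv a" using assms by simp
  also have "inv a \<otimes> (a \<otimes> g) = g" using assms(1,2) by (simp add: m_assoc[symmetric] l_inv)
  finally show ?thesis .
qed

lemma (in group) down_rel:
  assumes s: "s \<in> carrier G" and a: "a \<in> carrier G" and g: "g \<in> carrier G"
    and ss: "s \<otimes> s = \<one>" and sas: "s \<otimes> a \<otimes> s = inv a"
    and hc: "inv a \<otimes> (g \<otimes> s) = (g \<otimes> s) \<otimes> inv a"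
  shows "g \<otimes> a = inv a \<otimes> g"
proof -
  have sa: "s \<otimes> a = inv a \<otimes> s"
  proof -
    have "s \<otimes> a = s \<otimes> a \<otimes> (s \<otimes> s)" using s a ss by simp
    also have "\<dots> = (s \<otimes> a \<otimes> s) \<otimes> s" using s a by (simp add: m_assoc)
    finally show ?thesis using sas by simp
  qed
  have "g \<otimes> a = g \<otimes> (s \<otimes> s) \<otimes> a" using g ss by simp
  also have "\<dots> = (g \<otimes> s) \<otimes> (s \<otimes> a)" using s a g by (simp add: m_assoc)
  also have "\<dots> = (g \<otimes> s) \<otimes> (inv a \<otimes> s)" using sa by simp
  also have "\<dots> = ((g \<otimes> s) \<otimes> inv a) \<otimes> s" using s a g by (simp add: m_assoc)
  also have "\<dots> = (inv a \<otimes> (g \<otimes> s)) \<otimes> s" using hc by simp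
  also have "\<dots> = inv a \<otimes> g \<otimes> (s \<otimes> s)" using s a g by (simp add: m_assoc)
  also have "\<dots> = inv a \<otimes> g" using ss a g by simp
  finally show ?thesis .
qed

lemma (in group) down_rel2:
  assumes a: "a \<in> carrier G" and g: "g \<in> carrier G" and r: "g \<otimes> a = inv a \<otimes> g"
  shows "g \<otimes> inv a = a \<otimes> g"
proof -
  have "a \<otimes> g = a \<otimes> g \<otimes> (a \<otimes> inv a)" using a g by (simp add: r_inv)
  also have "\<dots> = a \<otimes> (g \<otimes> a) \<otimes> inv a" using a g by (simp add: m_assoc)
  also have "\<dots> = a \<otimes> (inv a \<otimes> g) \<otimes> inv a" using r by simp
  also have "\<dots> = g \<otimes> inv a" using a g by (simp add: m_assoc[symmetric] r_inv)
  finally show ?thesis by simp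
qed

theorem proposition4p16:
  fixes G :: "('g, 'b) monoid_scheme" and T :: "'g topology" and eps :: "'g \<Rightarrow> real"
    and sc :: "complex \<Rightarrow> 'h::ab_group_add \<Rightarrow> 'h" and ip :: "'h \<Rightarrow> 'h \<Rightarrow> complex"
    and U :: "'g \<Rightarrow> 'h \<Rightarrow> 'h" and \<sigma> \<alpha> :: 'g
  assumes "chilbert sc ip"
    and "graded_top_group G T eps"
    and "\<sigma> \<in> carrier G" and "eps \<sigma> = -1" and "\<sigma> \<otimes>\<^bsub>G\<^esub> \<sigma> = \<one>\<^bsub>G\<^esub>"
    and "au_rep G T eps sc ip U"
    and "\<alpha> \<in> carrier G" and "eps \<alpha> = 1"
    and "\<forall>g\<in>carrier G. eps g = 1 \<longrightarrow> \<alpha> \<otimes>\<^bsub>G\<^esub> g = g \<otimes>\<^bsub>G\<^esub> \<alpha>"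
    and "\<sigma> \<otimes>\<^bsub>G\<^esub> \<alpha> \<otimes>\<^bsub>G\<^esub> \<sigma> = inv\<^bsub>G\<^esub> \<alpha>"
  shows "\<exists>Z. unitary_op sc ip Z
           \<and> (\<forall>g\<in>carrier G. eps g = 1 \<longrightarrow> Z \<circ> U g = U g \<circ> Z)
           \<and> Z \<circ> Z = U \<alpha>
           \<and> (\<forall>g\<in>carrier G. eps g = -1 \<longrightarrow> U g \<circ> Z \<circ> inv_into UNIV (U g) = inv_into UNIV Z)"
proof -
  interpret H: chilbert sc ip by (rule assms(1))
  have grp: "group G" and epsv: "\<And>g. g \<in> carrier G \<Longrightarrow> eps g \<in> {1, -1}"
    and epsm: "\<And>x y. x \<in> carrier G \<Longrightarrow> y \<in> carrier G \<Longrightarrow> eps (x \<otimes>\<^bsub>G\<^esub> y) = eps x * eps y"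
    using assms(2) unfolding graded_top_group_def by auto
  interpret grp: group G by (rule grp)
  have Uu: "\<And>g. g \<in> carrier G \<Longrightarrow> eps g = 1 \<Longrightarrow> unitary_op sc ip (U g)"
    and Ua: "\<And>g. g \<in> carrier G \<Longrightarrow> eps g = -1 \<Longrightarrow> antiunitary_op sc ip (U g)"
    and Um: "\<And>g h. g \<in> carrier G \<Longrightarrow> h \<in> carrier G \<Longrightarrow> U (g \<otimes>\<^bsub>G\<^esub> h) = U g \<circ> U h"
    using assms(6) unfolding au_rep_def by auto
  have Umx: "U (g \<otimes>\<^bsub>G\<^esub> h) x = U g (U h x)" if "g \<in> carrier G" "h \<in> carrier G" for g h x
    using Um[OF that] by simp
  have eps1: "eps \<one>\<^bsub>G\<^esub> = 1"
  proof -
    have "eps \<one>\<^bsub>G\<^esub> = eps \<one>\<^bsub>G\<^esub> * eps \<one>\<^bsub>G\<^esub>" using epsm[of "\<one>\<^bsub>G\<^esub>" "\<one>\<^bsub>G\<^esub>"] by simp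
    moreover have "eps \<one>\<^bsub>G\<^esub> \<in> {1, -1}" using epsv by simp
    ultimately show ?thesis by auto
  qed
  have U1: "U \<one>\<^bsub>G\<^esub> x = x" for x
  proof -
    have "bij (U \<one>\<^bsub>G\<^esub>)" using Uu[OF grp.one_closed eps1] by (simp add: unitary_op_def)
    then have "inj (U \<one>\<^bsub>G\<^esub>)" by (rule bij_is_inj)
    moreover have "U \<one>\<^bsub>G\<^esub> (U \<one>\<^bsub>G\<^esub> x) = U \<one>\<^bsub>G\<^esub> x"
      using Umx[of "\<one>\<^bsub>G\<^esub>" "\<one>\<^bsub>G\<^esub>" x] by simp
    ultimately show ?thesis by (simp add: inj_eq)
  qed
  define ai where "ai = inv\<^bsub>G\<^esub> \<alpha>"
  have aic: "ai \<in> carrier G" using assms(7) by (simp add: ai_def)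
  have epsai: "eps ai = 1"
  proof -
    have "eps (\<alpha> \<otimes>\<^bsub>G\<^esub> ai) = eps \<alpha> * eps ai" by (rule epsm[OF assms(7) aic])
    then show ?thesis using assms(7,8) eps1 by (simp add: ai_def)
  qed
  define A where "A = U \<alpha>"
  define A' where "A' = U ai"
  have uA: "unitary_op sc ip A" using Uu[OF assms(7,8)] by (simp add: A_def)
  have uA': "unitary_op sc ip A'" using Uu[OF aic epsai] by (simp add: A'_def)
  have inv1: "A (A' x) = x" for x
    unfolding A_def A'_def using Umx[OF assms(7) aic, of x] U1 assms(7) by (simp add: ai_def)
  have inv2: "A' (A x) = x" for x
    unfolding A_def A'_def using Umx[OF aic assms(7), of x] U1 assms(7) by (simp add: ai_def)
  have uprops: "H.addv B \<and> H.chom B \<and> (\<forall>x y. ip (B x) (B y) = ip x y)" if "unitary_op sc ip B" for B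
    using that unfolding unitary_op_def H.addv_def H.chom_def by auto
  obtain Z Z' where aZ: "H.addv Z" and cZ: "H.chom Z" and iZ: "\<forall>x y. ip (Z x) (Z y) = ip x y"
    and ZZ': "\<forall>x. Z (Z' x) = x" and Z'Z: "\<forall>x. Z' (Z x) = x" and ZZ: "\<forall>x. Z (Z x) = A x"
    and Bcl: "\<forall>B. H.addv B \<and> H.chom B \<and> (\<forall>x. hnorm ip (B x) = hnorm ip x) \<and> H.cm B A \<and> H.cm B A' \<longrightarrow> H.cm B Z"
    and Jcl: "\<forall>J. H.addv J \<and> H.alin J \<and> (\<forall>x. hnorm ip (J x) = hnorm ip x) \<and> (\<forall>x. J (A x) = A' (J x))
           \<and> (\<forall>x. J (A' x) = A (J x)) \<longrightarrow> (\<forall>x. J (Z x) = Z' (J x))"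
    using H.sqrt_main[of A A'] uprops[OF uA] uprops[OF uA'] inv1 inv2 by blast
  have bijZ: "bij Z" using ZZ' Z'Z by (metis bij_betw_byWitness subset_UNIV surjI)
  have invZ: "inv_into UNIV Z = Z'" using ZZ' Z'Z by (intro inv_equality) auto
  have "unitary_op sc ip Z"
    using bijZ aZ cZ iZ unfolding unitary_op_def H.addv_def H.chom_def by blast
  moreover have "Z \<circ> U g = U g \<circ> Z" if g: "g \<in> carrier G" "eps g = 1" for g
  proof -
    have ug: "unitary_op sc ip (U g)" by (rule Uu[OF g])
    have c1: "g \<otimes>\<^bsub>G\<^esub> \<alpha> = \<alpha> \<otimes>\<^bsub>G\<^esub> g" using assms(9) g by simp
    have c2: "g \<otimes>\<^bsub>G\<^esub> ai = ai \<otimes>\<^bsub>G\<^esub> g"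
      using grp.comm_inv[OF assms(7) g(1)] c1 by (simp add: ai_def)
    have "H.cm (U g) A" unfolding H.cm_def A_def
      using Umx[OF g(1) assms(7)] Umx[OF assms(7) g(1)] c1 by metis
    moreover have "H.cm (U g) A'" unfolding H.cm_def A'_def
      using Umx[OF g(1) aic] Umx[OF aic g(1)] c2 by metis
    moreover have "\<forall>x. hnorm ip (U g x) = hnorm ip x"
      using uprops[OF ug] H.ip_nrm by blast
    ultimately have "H.cm (U g) Z" using Bcl uprops[OF ug] by blast
    then show ?thesis unfolding H.cm_def by (simp add: fun_eq_iff)
  qed
  moreover have "Z \<circ> Z = U \<alpha>" using ZZ by (simp add: fun_eq_iff A_def)
  moreover have "U g \<circ> Z \<circ> inv_into UNIV (U g) = inv_into UNIV Z"
    if g: "g \<in> carrier G" "eps g = -1" for g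
  proof -
    have au: "antiunitary_op sc ip (U g)" by (rule Ua[OF g])
    have gs: "g \<otimes>\<^bsub>G\<^esub> \<sigma> \<in> carrier G" using g(1) assms(3) by simp
    have epsgs: "eps (g \<otimes>\<^bsub>G\<^esub> \<sigma>) = 1" using epsm[OF g(1) assms(3)] g(2) assms(4) by simp
    have hc: "ai \<otimes>\<^bsub>G\<^esub> (g \<otimes>\<^bsub>G\<^esub> \<sigma>) = (g \<otimes>\<^bsub>G\<^esub> \<sigma>) \<otimes>\<^bsub>G\<^esub> ai"
      using grp.comm_inv[OF assms(7) gs] assms(9) gs epsgs by (simp add: ai_def)
    have r1: "g \<otimes>\<^bsub>G\<^esub> \<alpha> = ai \<otimes>\<^bsub>G\<^esub> g"
      using grp.down_rel[OF assms(3) assms(7) g(1) assms(5) assms(10)] hc by (simp add: ai_def)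
    have r2: "g \<otimes>\<^bsub>G\<^esub> ai = \<alpha> \<otimes>\<^bsub>G\<^esub> g"
      using grp.down_rel2[OF assms(7) g(1)] r1 by (simp add: ai_def)
    have J1: "\<forall>x. U g (A x) = A' (U g x)" unfolding A_def A'_def
      using Umx[OF g(1) assms(7)] Umx[OF aic g(1)] r1 by metis
    have J2: "\<forall>x. U g (A' x) = A (U g x)" unfolding A_def A'_def
      using Umx[OF g(1) aic] Umx[OF assms(7) g(1)] r2 by metis
    have aJ: "H.addv (U g)" and lJ: "H.alin (U g)" and iJ: "\<forall>x y. ip (U g x) (U g y) = cnj (ip x y)"
      and bJ: "bij (U g)"
      using au unfolding antiunitary_op_def H.addv_def H.alin_def by auto
    have nJ: "\<forall>x. hnorm ip (U g x) = hnorm ip x" using iJ by (simp add: hnorm_def)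
    have JZ: "U g (Z x) = Z' (U g x)" for x using Jcl aJ lJ nJ J1 J2 by blast
    show ?thesis
    proof (rule ext)
      fix y
      have "U g (inv_into UNIV (U g) y) = y" using bJ by (simp add: bij_is_surj surj_f_inv_f)
      then show "(U g \<circ> Z \<circ> inv_into UNIV (U g)) y = inv_into UNIV Z y"
        using JZ[of "inv_into UNIV (U g) y"] invZ by simp
    qed
  qed
  ultimately show ?thesis by blast
qed

end
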